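(* Let $(\mathbf{P},d_{\mathbf{P}})$ be a finite metric poset and $M,N$ be $\mathbf{P}$-modules. If there exists a Galois coupling of $(M,N)$, then $\mathsf{Res}(P^M_\bullet,P^N_\bullet)\neq\varnothing$; moreover there exists $(E_\bullet,F_\bullet)\in\mathsf{Res}(P^M_\bullet,P^N_\bullet)$ admitting at least one matching.
   Context: Fix a field $k$; a finite poset is a category with a unique morphism $x\to y$ iff $x\le y$; a $\mathbf{P}$-module is a functor $\mathbf{P}\to$ (finite-dimensional $k$-vector spaces); $g^*$ is precomposition with a monotone map $g$. A Galois insertion $f:\mathbf{Q}\rightleftarrows\mathbf{P}:g$ consists of monotone maps with $f(u)\le x\iff u\le g(x)$ and $f\circ g=\mathrm{id}_{\mathbf{P}}$. A Galois coupling of $(M,N)$ is $(\mathbf{Q},f\dashv g,h\dashv i,\Gamma)$ with $\mathbf{Q}$ a finite poset, $f:\mathbf{Q}\rightleftarrows\mathbf{P}:g$, $h:\mathbf{Q}\rightleftarrows\mathbf{P}:i$ Galois insertions and a $\mathbf{Q}$-module $\Gamma$ with $g^*\Gamma\cong M$, $i^*\Gamma\cong N$. For $x\in\mathbf{P}$, $k[\mathbf{P}]_x$ is the module with value $k$ at $y\ge x$, $0$ elsewhere, identity maps (the indecomposable projectives). For $y\le x$, $\rho(x\ge y):k[\mathbf{P}]_x\to k[\mathbf{P}]_y$ is the canonical morphism (identity at each $z\ge x$), $0$ otherwise. For projectives with fixed decompositions $E=\bigoplus_{x\in\mathrm{smd}(E)}k[\mathbf{P}]_x$, $F=\bigoplus_{y\in\mathrm{smd}(F)}k[\mathbf{P}]_y$,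 each $\alpha:E\to F$ is uniquely $[a_{x,y}\rho(x\ge y)]$ with $a_{x,y}=0$ unless $x\ge y$; $\mathrm{Mat}(\alpha)=[a_{x,y}]$. Projective resolutions $E_\bullet=(E_i,\partial_i:E_{i+1}\to E_i)_{i\ge0}$ are taken with fixed decompositions of their terms, $|E_i|$ being the number of summands; $P^M_\bullet$ is a minimal projective resolution of $M$. $\mathsf{Res}(P^M_\bullet,P^N_\bullet)$ is the set of pairs $(E_\bullet,F_\bullet)$ of projective resolutions of $M$ and $N$ with $|E_i|=|F_i|$ for all $i$. A matching of $(E_\bullet,F_\bullet)$ is a family of bijections $B_i:\mathrm{smd}(E_i)\to\mathrm{smd}(F_i)$ such that the $(x',x)$-entry of $\mathrm{Mat}(\partial^E_i)$ equals the $(B_{i+1}(x'),B_i(x))$-entry of $\mathrm{Mat}(\partial^F_i)$ for all $i$, $x\in\mathrm{smd}(E_i)$, $x'\in\mathrm{smd}(E_{i+1})$. *)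

theory Defs
  imports "Jordan_Normal_Form.Matrix"
begin

definition finite_poset :: "'a set \<Rightarrow> ('a \<Rightarrow> 'a \<Rightarrow> bool) \<Rightarrow> bool" where
  "finite_poset X lep \<longleftrightarrow> finite X \<and> (\<forall>x\<in>X. lep x x)
     \<and> (\<forall>x\<in>X. \<forall>y\<in>X. lep x y \<and> lep y x \<longrightarrow> x = y)
     \<and> (\<forall>x\<in>X. \<forall>y\<in>X. \<forall>z\<in>X. lep x y \<and> lep y z \<longrightarrow> lep x z)"

definition monotone_betw :: "'a set \<Rightarrow> ('a \<Rightarrow> 'a \<Rightarrow> bool) \<Rightarrow> 'b set \<Rightarrow> ('b \<Rightarrow> 'b \<Rightarrow> bool)
    \<Rightarrow> ('a \<Rightarrow> 'b) \<Rightarrow> bool" where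
  "monotone_betw X leX Y leY f \<longleftrightarrow> f ` X \<subseteq> Y \<and> (\<forall>x\<in>X. \<forall>y\<in>X. leX x y \<longrightarrow> leY (f x) (f y))"

definition galois_insertion :: "'q set \<Rightarrow> ('q \<Rightarrow> 'q \<Rightarrow> bool) \<Rightarrow> 'p set \<Rightarrow> ('p \<Rightarrow> 'p \<Rightarrow> bool)
    \<Rightarrow> ('q \<Rightarrow> 'p) \<Rightarrow> ('p \<Rightarrow> 'q) \<Rightarrow> bool" where
  "galois_insertion Q leQ P leP f g \<longleftrightarrow>
     monotone_betw Q leQ P leP f \<and> monotone_betw P leP Q leQ g
     \<and> (\<forall>u\<in>Q. \<forall>x\<in>P. leP (f u) x \<longleftrightarrow> leQ u (g x))
     \<and> (\<forall>x\<in>P. f (g x) = x)"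

(* A module over a poset: a functor into finite-dimensional k-vector spaces, each
   vector space being represented (up to isomorphism) by k^(dim x), and each
   structure map M(x \<lep> y) by a (dim y) x (dim x) matrix. *)
type_synonym ('a, 'k) pmod = "('a \<Rightarrow> nat) \<times> ('a \<Rightarrow> 'a \<Rightarrow> 'k mat)"

definition is_pmod :: "'a set \<Rightarrow> ('a \<Rightarrow> 'a \<Rightarrow> bool) \<Rightarrow> ('a, 'k::field) pmod \<Rightarrow> bool" where
  "is_pmod X lep M \<longleftrightarrow>
     (\<forall>x\<in>X. \<forall>y\<in>X. lep x y \<longrightarrow> snd M x y \<in> carrier_mat (fst M y) (fst M x))
     \<and> (\<forall>x\<in>X. snd M x x = 1\<^sub>m (fst M x))
     \<and> (\<forall>x\<in>X. \<forall>y\<in>X. \<forall>z\<in>X. lep x y \<and> lep y z \<longrightarrow> snd M x z = snd M y z * snd M x y)"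

definition pullback :: "('p \<Rightarrow> 'q) \<Rightarrow> ('q, 'k) pmod \<Rightarrow> ('p, 'k) pmod" where
  "pullback g G = (\<lambda>x. fst G (g x), \<lambda>x y. snd G (g x) (g y))"

definition pmod_iso :: "'a set \<Rightarrow> ('a \<Rightarrow> 'a \<Rightarrow> bool) \<Rightarrow> ('a, 'k::field) pmod \<Rightarrow> ('a, 'k) pmod \<Rightarrow> bool" where
  "pmod_iso X lep M N \<longleftrightarrow> (\<exists>\<phi>.
     (\<forall>x\<in>X. \<phi> x \<in> carrier_mat (fst N x) (fst M x) \<and> invertible_mat (\<phi> x))
     \<and> (\<forall>x\<in>X. \<forall>y\<in>X. lep x y \<longrightarrow> \<phi> y * snd M x y = snd N x y * \<phi> x))"

(* Galois coupling of (M,N); the finite poset Q is taken with carrier a subset of nat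
   (every finite poset is isomorphic to such a one). *)
definition galois_coupling_exists :: "'p set \<Rightarrow> ('p \<Rightarrow> 'p \<Rightarrow> bool) \<Rightarrow> ('p, 'k::field) pmod
    \<Rightarrow> ('p, 'k) pmod \<Rightarrow> bool" where
  "galois_coupling_exists P lep M N \<longleftrightarrow>
    (\<exists>(Q :: nat set) leQ f g h i \<Gamma>.
       finite_poset Q leQ
       \<and> galois_insertion Q leQ P lep f g
       \<and> galois_insertion Q leQ P lep h i
       \<and> is_pmod Q leQ \<Gamma>
       \<and> pmod_iso P lep (pullback g \<Gamma>) M
       \<and> pmod_iso P lep (pullback i \<Gamma>) N)"

(* A projective with fixed decomposition \<Oplus>_j k[P]_(xs!j) is given by the list xs of
   its summands.  Its value at y has basis the indices j with xs!j \<lep> y. *)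
definition active :: "('a \<Rightarrow> 'a \<Rightarrow> bool) \<Rightarrow> 'a list \<Rightarrow> 'a \<Rightarrow> nat list" where
  "active lep xs y = filter (\<lambda>j. lep (xs ! j) y) [0..<length xs]"

(* structure map of \<Oplus>_j k[P]_(xs!j) from y to z (y \<lep> z): identity on each summand *)
definition proj_struct :: "('a \<Rightarrow> 'a \<Rightarrow> bool) \<Rightarrow> 'a list \<Rightarrow> 'a \<Rightarrow> 'a \<Rightarrow> 'k::field mat" where
  "proj_struct lep xs y z = mat (length (active lep xs z)) (length (active lep xs y))
     (\<lambda>(r, c). if active lep xs z ! r = active lep xs y ! c then 1 else 0)"

(* the component at y of the morphism \<Oplus>_j' k[P]_(xs'!j') \<rightarrow> \<Oplus>_j k[P]_(xs!j) with
   Mat = A = [a_(j',j)], i.e. the morphism [a_(j',j) \<rho>(xs'!j' \<ge> xs!j)] *)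
definition mat_morph_at :: "('a \<Rightarrow> 'a \<Rightarrow> bool) \<Rightarrow> 'a list \<Rightarrow> 'a list \<Rightarrow> 'k::field mat \<Rightarrow> 'a \<Rightarrow> 'k mat" where
  "mat_morph_at lep xs' xs A y = mat (length (active lep xs y)) (length (active lep xs' y))
     (\<lambda>(r, c). A $$ (active lep xs' y ! c, active lep xs y ! r))"

definition exact_at :: "nat \<Rightarrow> nat \<Rightarrow> nat \<Rightarrow> 'k::field mat \<Rightarrow> 'k mat \<Rightarrow> bool" where
  "exact_at u v w B A \<longleftrightarrow>
     (\<forall>x\<in>carrier_vec v. A *\<^sub>v x = 0\<^sub>v w \<longleftrightarrow> (\<exists>z\<in>carrier_vec u. x = B *\<^sub>v z))"

(* (E, Mat(\<partial>^E)) is a projective resolution of M: E i is the list of summands of E_i,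
   D i = Mat(\<partial>_i) with rows indexed by smd(E_(i+1)) and columns by smd(E_i);
   there is an augmentation E_0 \<rightarrow> M making ... \<rightarrow> E_1 \<rightarrow> E_0 \<rightarrow> M \<rightarrow> 0 exact. *)
definition is_proj_res :: "'a set \<Rightarrow> ('a \<Rightarrow> 'a \<Rightarrow> bool) \<Rightarrow> ('a, 'k::field) pmod
    \<Rightarrow> (nat \<Rightarrow> 'a list) \<Rightarrow> (nat \<Rightarrow> 'k mat) \<Rightarrow> bool" where
  "is_proj_res X lep M E D \<longleftrightarrow>
     (\<forall>i. set (E i) \<subseteq> X)
     \<and> (\<forall>i. D i \<in> carrier_mat (length (E (Suc i))) (length (E i)))
     \<and> (\<forall>i. \<forall>r < length (E (Suc i)). \<forall>c < length (E i).
          \<not> lep (E i ! c) (E (Suc i) ! r) \<longrightarrow> D i $$ (r, c) = 0)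
     \<and> (\<exists>\<epsilon>.
          (\<forall>y\<in>X. \<epsilon> y \<in> carrier_mat (fst M y) (length (active lep (E 0) y)))
        \<and> (\<forall>y\<in>X. \<forall>z\<in>X. lep y z \<longrightarrow> \<epsilon> z * proj_struct lep (E 0) y z = snd M y z * \<epsilon> y)
        \<and> (\<forall>y\<in>X. \<forall>v\<in>carrier_vec (fst M y).
              \<exists>x\<in>carrier_vec (length (active lep (E 0) y)). \<epsilon> y *\<^sub>v x = v)
        \<and> (\<forall>y\<in>X. exact_at (length (active lep (E 1) y)) (length (active lep (E 0) y)) (fst M y)
              (mat_morph_at lep (E 1) (E 0) (D 0) y) (\<epsilon> y))
        \<and> (\<forall>y\<in>X. \<forall>i. exact_at (length (active lep (E (Suc (Suc i))) y))
              (length (active lep (E (Suc i)) y)) (length (active lep (E i) y))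
              (mat_morph_at lep (E (Suc (Suc i))) (E (Suc i)) (D (Suc i)) y)
              (mat_morph_at lep (E (Suc i)) (E i) (D i) y)))"

definition Res :: "'a set \<Rightarrow> ('a \<Rightarrow> 'a \<Rightarrow> bool) \<Rightarrow> ('a, 'k::field) pmod \<Rightarrow> ('a, 'k) pmod
    \<Rightarrow> (((nat \<Rightarrow> 'a list) \<times> (nat \<Rightarrow> 'k mat)) \<times> ((nat \<Rightarrow> 'a list) \<times> (nat \<Rightarrow> 'k mat))) set" where
  "Res X lep M N = {((E, DE), (F, DF)). is_proj_res X lep M E DE \<and> is_proj_res X lep N F DF
      \<and> (\<forall>i. length (E i) = length (F i))}"

definition has_matching :: "(nat \<Rightarrow> 'a list) \<Rightarrow> (nat \<Rightarrow> 'k mat) \<Rightarrow> (nat \<Rightarrow> 'a list) \<Rightarrow> (nat \<Rightarrow> 'k mat) \<Rightarrow> bool" where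
  "has_matching E DE F DF \<longleftrightarrow> (\<exists>B :: nat \<Rightarrow> nat \<Rightarrow> nat.
     (\<forall>i. bij_betw (B i) {..<length (E i)} {..<length (F i)})
     \<and> (\<forall>i. \<forall>c < length (E i). \<forall>r < length (E (Suc i)).
          DE i $$ (r, c) = DF i $$ (B (Suc i) r, B i c)))"

end

theory Submission
  imports Defs
begin


definition Rm :: "('a \<Rightarrow> 'a \<Rightarrow> bool) \<Rightarrow> 'a list \<Rightarrow> 'a \<Rightarrow> 'k::field mat" where
  "Rm lep xs y = mat (length (active lep xs y)) (length xs) (\<lambda>(r,j). if j = active lep xs y ! r then 1 else 0)"
definition Xm :: "('a \<Rightarrow> 'a \<Rightarrow> bool) \<Rightarrow> 'a list \<Rightarrow> 'a \<Rightarrow> 'k::field mat" where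
  "Xm lep xs y = mat (length xs) (length (active lep xs y)) (\<lambda>(j,c). if j = active lep xs y ! c then 1 else 0)"
definition supp :: "('a \<Rightarrow> 'a \<Rightarrow> bool) \<Rightarrow> 'a list \<Rightarrow> 'a \<Rightarrow> 'k::field vec \<Rightarrow> bool" where
  "supp lep xs y u \<longleftrightarrow> (\<forall>j<length xs. u $ j \<noteq> 0 \<longrightarrow> lep (xs ! j) y)"

lemma active_set: "set (active lep xs y) = {j. j < length xs \<and> lep (xs!j) y}"
  by (auto simp: active_def)
lemma active_distinct: "distinct (active lep xs y)" by (simp add: active_def)
lemma active_lt: "c < length (active lep xs y) \<Longrightarrow> active lep xs y ! c < length xs"
  using nth_mem[of c "active lep xs y"] active_set[of lep xs y] by auto
lemma active_lep: "c < length (active lep xs y) \<Longrightarrow> lep (xs ! (active lep xs y ! c)) y"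
  using nth_mem[of c "active lep xs y"] active_set[of lep xs y] by auto
lemma active_nth_eq: "r < length (active lep xs y) \<Longrightarrow> c < length (active lep xs y) \<Longrightarrow>
   (active lep xs y ! r = active lep xs y ! c) = (r = c)"
  using active_distinct[of lep xs y] nth_eq_iff_index_eq by metis

lemma Rm_carrier[simp]: "Rm lep xs y \<in> carrier_mat (length (active lep xs y)) (length xs)"
  by (simp add: Rm_def)
lemma Xm_carrier[simp]: "Xm lep xs y \<in> carrier_mat (length xs) (length (active lep xs y))"
  by (simp add: Xm_def)

lemma dim_Rm[simp]: "dim_row (Rm lep xs y) = length (active lep xs y)" "dim_col (Rm lep xs y) = length xs"
  by (simp_all add: Rm_def)
lemma dim_Xm[simp]: "dim_row (Xm lep xs y) = length xs" "dim_col (Xm lep xs y) = length (active lep xs y)"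
  by (simp_all add: Xm_def)

lemma Rm_mult_carrier[simp]: "u \<in> carrier_vec (length xs) \<Longrightarrow> Rm lep xs y *\<^sub>v u \<in> carrier_vec (length (active lep xs y))"
  by (metis Rm_carrier mult_mat_vec_carrier)
lemma Xm_mult_carrier[simp]: "x \<in> carrier_vec (length (active lep xs y)) \<Longrightarrow> Xm lep xs y *\<^sub>v x \<in> carrier_vec (length xs)"
  by (metis Xm_carrier mult_mat_vec_carrier)

lemma Rm_vec: assumes "u \<in> carrier_vec (length xs)"
  shows "Rm lep xs y *\<^sub>v u = vec (length (active lep xs y)) (\<lambda>r. u $ (active lep xs y ! r))"
proof (rule eq_vecI)
  fix r assume "r < dim_vec (vec (length (active lep xs y)) (\<lambda>r. u $ (active lep xs y ! r)))"
  hence r: "r < length (active lep xs y)" by simp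
  have "(Rm lep xs y *\<^sub>v u) $ r = (\<Sum>j<length xs. (if j = active lep xs y ! r then 1 else 0) * u $ j)"
    using r assms unfolding Rm_def
    by (auto simp: scalar_prod_def row_def lessThan_atLeast0 intro!: sum.cong)
  also have "\<dots> = (\<Sum>j<length xs. (if j = active lep xs y ! r then u $ j else 0))"
    by (rule sum.cong) auto
  also have "\<dots> = u $ (active lep xs y ! r)" using active_lt[OF r] by (simp add: sum.delta)
  finally show "(Rm lep xs y *\<^sub>v u) $ r = vec (length (active lep xs y)) (\<lambda>r. u $ (active lep xs y ! r)) $ r"
    using r by simp
qed (simp add: Rm_def)

lemma Xm_vec: assumes "x \<in> carrier_vec (length (active lep xs y))"
  shows "Xm lep xs y *\<^sub>v x = vec (length xs) (\<lambda>j. \<Sum>c<length (active lep xs y). if j = active lep xs y ! c then x $ c else 0)"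
proof (rule eq_vecI)
  fix j assume "j < dim_vec (vec (length xs) (\<lambda>j. \<Sum>c<length (active lep xs y). if j = active lep xs y ! c then x $ c else 0))"
  hence j: "j < length xs" by simp
  show "(Xm lep xs y *\<^sub>v x) $ j = vec (length xs) (\<lambda>j. \<Sum>c<length (active lep xs y). if j = active lep xs y ! c then x $ c else 0) $ j"
    using j assms unfolding Xm_def
    by (auto simp: scalar_prod_def row_def lessThan_atLeast0 intro!: sum.cong)
qed (simp add: Xm_def)

lemma RX: assumes "x \<in> carrier_vec (length (active lep xs y))"
  shows "Rm lep xs y *\<^sub>v (Xm lep xs y *\<^sub>v x) = x"
proof -
  have c: "Xm lep xs y *\<^sub>v x \<in> carrier_vec (length xs)" using assms by simp
  show ?thesis
  proof (rule eq_vecI)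
    fix r assume "r < dim_vec x"
    hence r: "r < length (active lep xs y)" using assms by simp
    have "(Rm lep xs y *\<^sub>v (Xm lep xs y *\<^sub>v x)) $ r = (Xm lep xs y *\<^sub>v x) $ (active lep xs y ! r)"
      using Rm_vec[OF c] r by simp
    also have "\<dots> = (\<Sum>c<length (active lep xs y). if active lep xs y ! r = active lep xs y ! c then x $ c else 0)"
      using Xm_vec[OF assms] active_lt[OF r] by simp
    also have "\<dots> = (\<Sum>c<length (active lep xs y). if c = r then x $ c else 0)"
      using r by (auto simp: active_nth_eq intro!: sum.cong)
    also have "\<dots> = x $ r" using r by (simp add: sum.delta)
    finally show "(Rm lep xs y *\<^sub>v (Xm lep xs y *\<^sub>v x)) $ r = x $ r" .
  qed (use assms in \<open>simp add: Rm_def\<close>)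
qed

lemma XR: assumes "u \<in> carrier_vec (length xs)" "supp lep xs y u"
  shows "Xm lep xs y *\<^sub>v (Rm lep xs y *\<^sub>v u) = u"
proof -
  have c: "Rm lep xs y *\<^sub>v u \<in> carrier_vec (length (active lep xs y))" using assms by simp
  show ?thesis
  proof (rule eq_vecI)
    fix j assume "j < dim_vec u"
    hence j: "j < length xs" using assms by simp
    have "(Xm lep xs y *\<^sub>v (Rm lep xs y *\<^sub>v u)) $ j
      = (\<Sum>c<length (active lep xs y). if j = active lep xs y ! c then (Rm lep xs y *\<^sub>v u) $ c else 0)"
      using Xm_vec[OF c] j by simp
    also have "\<dots> = (\<Sum>c<length (active lep xs y). if j = active lep xs y ! c then u $ j else 0)"
      using Rm_vec[OF assms(1)] by (auto intro!: sum.cong)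
    finally have e: "(Xm lep xs y *\<^sub>v (Rm lep xs y *\<^sub>v u)) $ j
      = (\<Sum>c<length (active lep xs y). if j = active lep xs y ! c then u $ j else 0)" .
    show "(Xm lep xs y *\<^sub>v (Rm lep xs y *\<^sub>v u)) $ j = u $ j"
    proof (cases "j \<in> set (active lep xs y)")
      case True
      then obtain c0 where c0: "c0 < length (active lep xs y)" "active lep xs y ! c0 = j"
        by (auto simp: in_set_conv_nth)
      have "(\<Sum>c<length (active lep xs y). if j = active lep xs y ! c then u $ j else 0)
        = (\<Sum>c<length (active lep xs y). if c = c0 then u $ j else 0)"
        using c0 by (auto simp: active_nth_eq intro!: sum.cong)
      then show ?thesis using e c0 by (simp add: sum.delta)
    next
      case False
      hence "u $ j = 0" using assms(2) j active_set[of lep xs y] unfolding supp_def by auto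
      moreover have "\<forall>c<length (active lep xs y). j \<noteq> active lep xs y ! c" using False nth_mem by blast
      ultimately show ?thesis using e by simp
    qed
  qed (use assms in \<open>simp add: Xm_def\<close>)
qed

lemma supp_X: assumes "x \<in> carrier_vec (length (active lep xs y))"
  shows "supp lep xs y (Xm lep xs y *\<^sub>v x)"
  unfolding supp_def Xm_vec[OF assms]
proof (intro allI impI)
  fix j assume j: "j < length xs" and ne: "vec (length xs) (\<lambda>j. \<Sum>c<length (active lep xs y). if j = active lep xs y ! c then x $ c else 0) $ j \<noteq> 0"
  hence "(\<Sum>c<length (active lep xs y). if j = active lep xs y ! c then x $ c else 0) \<noteq> 0" by simp
  then obtain c where c: "c \<in> {..<length (active lep xs y)}" "(if j = active lep xs y ! c then x $ c else 0) \<noteq> 0"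
    by (rule sum.not_neutral_contains_not_neutral)
  hence "c < length (active lep xs y)" "j = active lep xs y ! c" by (auto split: if_splits)
  thus "lep (xs ! j) y" using active_lep by metis
qed

lemma supp_mono: "supp lep xs y u \<Longrightarrow> set xs \<subseteq> X \<Longrightarrow> y \<in> X \<Longrightarrow> z \<in> X
  \<Longrightarrow> (\<forall>a\<in>X. \<forall>b\<in>X. \<forall>c\<in>X. lep a b \<and> lep b c \<longrightarrow> lep a c) \<Longrightarrow> lep y z \<Longrightarrow> supp lep xs z u"
  unfolding supp_def by (metis nth_mem subsetD)



lemma mv_entry: "i < dim_row B \<Longrightarrow> dim_vec w = dim_col B \<Longrightarrow>
   (B *\<^sub>v w) $ i = (\<Sum>j<dim_col B. B $$ (i,j) * w $ j)"
  by (auto simp: scalar_prod_def row_def lessThan_atLeast0 intro!: sum.cong)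

lemma mv_zero: "(A :: 'k::field mat) \<in> carrier_mat p q \<Longrightarrow> A *\<^sub>v 0\<^sub>v q = 0\<^sub>v p"
  by (rule eq_vecI) (auto simp: mv_entry)

lemma mv_unit: "(A :: 'k::field mat) \<in> carrier_mat p q \<Longrightarrow> c < q \<Longrightarrow> i < p \<Longrightarrow>
   (A *\<^sub>v unit_vec q c) $ i = A $$ (i, c)"
  by simp

lemma mat_eq_vecI: assumes "(A :: 'k::field mat) \<in> carrier_mat p q" "B \<in> carrier_mat p q"
  "\<And>v. v \<in> carrier_vec q \<Longrightarrow> A *\<^sub>v v = B *\<^sub>v v" shows "A = B"
proof (rule eq_matI)
  fix i j assume "i < dim_row B" "j < dim_col B"
  hence i: "i < p" and j: "j < q" using assms by auto
  show "A $$ (i,j) = B $$ (i,j)"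
    using mv_unit[OF assms(1) j i] mv_unit[OF assms(2) j i] assms(3)[of "unit_vec q j"] by simp
qed (use assms in auto)

lemma zero_by_units: assumes "(A :: 'k::field mat) \<in> carrier_mat p q"
  "\<And>c. c < q \<Longrightarrow> A *\<^sub>v unit_vec q c = 0\<^sub>v p" "v \<in> carrier_vec q"
  shows "A *\<^sub>v v = 0\<^sub>v p"
proof -
  have "A = 0\<^sub>m p q"
  proof (rule eq_matI)
    fix i j assume "i < dim_row (0\<^sub>m p q :: 'k mat)" "j < dim_col (0\<^sub>m p q :: 'k mat)"
    hence i: "i < p" and j: "j < q" by auto
    show "A $$ (i,j) = 0\<^sub>m p q $$ (i,j)" using mv_unit[OF assms(1) j i] assms(2)[OF j] i j by simp
  qed (use assms in auto)
  thus ?thesis using assms(3) by (auto intro!: eq_vecI simp: mv_entry)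
qed

lemma proj_struct_vec: assumes "v \<in> carrier_vec (length (active lep xs y))"
  shows "proj_struct lep xs y z *\<^sub>v v = Rm lep xs z *\<^sub>v (Xm lep xs y *\<^sub>v v)"
proof (rule eq_vecI)
  have c: "Xm lep xs y *\<^sub>v v \<in> carrier_vec (length xs)" using assms by simp
  fix r assume "r < dim_vec (Rm lep xs z *\<^sub>v (Xm lep xs y *\<^sub>v v))"
  hence r: "r < length (active lep xs z)" by (simp add: Rm_def)
  have "(Rm lep xs z *\<^sub>v (Xm lep xs y *\<^sub>v v)) $ r = (Xm lep xs y *\<^sub>v v) $ (active lep xs z ! r)"
    using Rm_vec[OF c] r by simp
  also have "\<dots> = (\<Sum>c<length (active lep xs y). if active lep xs z ! r = active lep xs y ! c then v $ c else 0)"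
    using Xm_vec[OF assms] active_lt[OF r] by simp
  also have "\<dots> = (\<Sum>c<length (active lep xs y). proj_struct lep xs y z $$ (r,c) * v $ c)"
    using r by (auto simp: proj_struct_def intro!: sum.cong)
  also have "\<dots> = (proj_struct lep xs y z *\<^sub>v v) $ r"
    using r assms by (subst mv_entry) (auto simp: proj_struct_def)
  finally show "(proj_struct lep xs y z *\<^sub>v v) $ r = (Rm lep xs z *\<^sub>v (Xm lep xs y *\<^sub>v v)) $ r" by simp
qed (simp add: proj_struct_def Rm_def)

lemma morph_vec: assumes A: "A \<in> carrier_mat (length xs') (length xs)"
  and z: "z \<in> carrier_vec (length (active lep xs' y))"
  shows "mat_morph_at lep xs' xs A y *\<^sub>v z = Rm lep xs y *\<^sub>v (A\<^sup>T *\<^sub>v (Xm lep xs' y *\<^sub>v z))"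
proof (rule eq_vecI)
  have c: "Xm lep xs' y *\<^sub>v z \<in> carrier_vec (length xs')" using z by simp
  have c2: "A\<^sup>T *\<^sub>v (Xm lep xs' y *\<^sub>v z) \<in> carrier_vec (length xs)" using c A by auto
  fix r assume "r < dim_vec (Rm lep xs y *\<^sub>v (A\<^sup>T *\<^sub>v (Xm lep xs' y *\<^sub>v z)))"
  hence r: "r < length (active lep xs y)" by (simp add: Rm_def)
  let ?a = "active lep xs y" and ?a' = "active lep xs' y"
  have "(Rm lep xs y *\<^sub>v (A\<^sup>T *\<^sub>v (Xm lep xs' y *\<^sub>v z))) $ r = (A\<^sup>T *\<^sub>v (Xm lep xs' y *\<^sub>v z)) $ (?a ! r)"
    using Rm_vec[OF c2] r by simp
  also have "\<dots> = (\<Sum>j'<length xs'. A $$ (j', ?a ! r) * (Xm lep xs' y *\<^sub>v z) $ j')"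
    using active_lt[OF r] A c by (subst mv_entry) auto
  also have "\<dots> = (\<Sum>j'<length xs'. A $$ (j', ?a ! r) * (\<Sum>c<length ?a'. if j' = ?a' ! c then z $ c else 0))"
    using Xm_vec[OF z] by (auto intro!: sum.cong)
  also have "\<dots> = (\<Sum>j'<length xs'. \<Sum>c<length ?a'. if j' = ?a' ! c then A $$ (j', ?a ! r) * z $ c else 0)"
    by (auto simp: sum_distrib_left intro!: sum.cong)
  also have "\<dots> = (\<Sum>c<length ?a'. \<Sum>j'<length xs'. if j' = ?a' ! c then A $$ (j', ?a ! r) * z $ c else 0)"
    by (rule sum.swap)
  also have "\<dots> = (\<Sum>c<length ?a'. A $$ (?a' ! c, ?a ! r) * z $ c)"
    using active_lt[of _ lep xs' y] by (auto intro!: sum.cong)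
  also have "\<dots> = (\<Sum>c<length ?a'. mat_morph_at lep xs' xs A y $$ (r,c) * z $ c)"
    using r by (auto simp: mat_morph_at_def intro!: sum.cong)
  also have "\<dots> = (mat_morph_at lep xs' xs A y *\<^sub>v z) $ r"
    using r z by (subst mv_entry) (auto simp: mat_morph_at_def)
  finally show "(mat_morph_at lep xs' xs A y *\<^sub>v z) $ r = (Rm lep xs y *\<^sub>v (A\<^sup>T *\<^sub>v (Xm lep xs' y *\<^sub>v z))) $ r" by simp
qed (simp add: mat_morph_at_def Rm_def)

definition tri :: "('a \<Rightarrow> 'a \<Rightarrow> bool) \<Rightarrow> 'a list \<Rightarrow> 'a list \<Rightarrow> 'k::field mat \<Rightarrow> bool" where
  "tri lep E E' D \<longleftrightarrow> (\<forall>r < length E'. \<forall>c < length E. \<not> lep (E ! c) (E' ! r) \<longrightarrow> D $$ (r, c) = 0)"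

definition closed_fam :: "'a set \<Rightarrow> ('a \<Rightarrow> 'a \<Rightarrow> bool) \<Rightarrow> 'a list \<Rightarrow> ('a \<Rightarrow> 'k::field mat) \<Rightarrow> bool" where
  "closed_fam X lep E \<phi> \<longleftrightarrow> (\<forall>y\<in>X. dim_col (\<phi> y) = length (active lep E y))
    \<and> (\<forall>y\<in>X. \<forall>z\<in>X. lep y z \<longrightarrow> (\<forall>v\<in>carrier_vec (length (active lep E y)).
         \<phi> y *\<^sub>v v = 0\<^sub>v (dim_row (\<phi> y)) \<longrightarrow> \<phi> z *\<^sub>v (proj_struct lep E y z *\<^sub>v v) = 0\<^sub>v (dim_row (\<phi> z))))"

lemma supp_tri:
  assumes D: "D \<in> carrier_mat (length E') (length E)" and t: "tri lep E E' D"
    and EX: "set E \<subseteq> X" and E'X: "set E' \<subseteq> X" and y: "y \<in> X"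
    and tr: "\<forall>a\<in>X. \<forall>b\<in>X. \<forall>c\<in>X. lep a b \<and> lep b c \<longrightarrow> lep a c"
    and w: "w \<in> carrier_vec (length E')" and s: "supp lep E' y w"
  shows "supp lep E y (D\<^sup>T *\<^sub>v w)"
  unfolding supp_def
proof (intro allI impI)
  fix j assume j: "j < length E" and ne: "(D\<^sup>T *\<^sub>v w) $ j \<noteq> 0"
  have "(D\<^sup>T *\<^sub>v w) $ j = (\<Sum>j'<length E'. D $$ (j', j) * w $ j')"
    using j D w by (subst mv_entry) auto
  with ne obtain j' where j': "j' < length E'" "D $$ (j', j) * w $ j' \<noteq> 0"
    by (metis (no_types, lifting) lessThan_iff sum.neutral)
  hence "lep (E ! j) (E' ! j')" using t j unfolding tri_def by auto
  moreover have "lep (E' ! j') y" using s j' unfolding supp_def by auto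
  ultimately show "lep (E ! j) y" using tr EX E'X y j j' by (meson nth_mem subsetD)
qed

lemma closed_next:
  assumes fp: "finite_poset X lep" and D: "D \<in> carrier_mat (length E') (length E)" and t: "tri lep E E' D"
    and EX: "set E \<subseteq> X" and E'X: "set E' \<subseteq> X"
  shows "closed_fam X lep E' (mat_morph_at lep E' E D)"
  unfolding closed_fam_def
proof (intro conjI ballI impI)
  have tr: "\<forall>a\<in>X. \<forall>b\<in>X. \<forall>c\<in>X. lep a b \<and> lep b c \<longrightarrow> lep a c" using fp unfolding finite_poset_def by blast
  fix y z v assume y: "y \<in> X" and z: "z \<in> X" and yz: "lep y z"
    and v: "v \<in> carrier_vec (length (active lep E' y))"
    and k: "mat_morph_at lep E' E D y *\<^sub>v v = 0\<^sub>v (dim_row (mat_morph_at lep E' E D y))"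
  define u where "u = Xm lep E' y *\<^sub>v v"
  have u: "u \<in> carrier_vec (length E')" "supp lep E' y u" using v supp_X[OF v] unfolding u_def by auto
  have uz: "supp lep E' z u" using supp_mono[OF u(2) E'X y z tr yz] .
  have p: "proj_struct lep E' y z *\<^sub>v v \<in> carrier_vec (length (active lep E' z))"
    using proj_struct_vec[OF v] u(1) unfolding u_def by simp
  have "mat_morph_at lep E' E D z *\<^sub>v (proj_struct lep E' y z *\<^sub>v v)
     = Rm lep E z *\<^sub>v (D\<^sup>T *\<^sub>v (Xm lep E' z *\<^sub>v (Rm lep E' z *\<^sub>v u)))"
    using morph_vec[OF D p] proj_struct_vec[OF v] unfolding u_def by simp
  also have "\<dots> = Rm lep E z *\<^sub>v (D\<^sup>T *\<^sub>v u)" using XR[OF u(1) uz] by simp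
  finally have e1: "mat_morph_at lep E' E D z *\<^sub>v (proj_struct lep E' y z *\<^sub>v v) = Rm lep E z *\<^sub>v (D\<^sup>T *\<^sub>v u)" .
  have dc: "D\<^sup>T *\<^sub>v u \<in> carrier_vec (length E)" using D u(1) by (metis transpose_carrier_mat mult_mat_vec_carrier)
  have e2: "Xm lep E y *\<^sub>v (Rm lep E y *\<^sub>v (D\<^sup>T *\<^sub>v u)) = D\<^sup>T *\<^sub>v u"
    using XR[OF dc supp_tri[OF D t EX E'X y tr u]] .
  have e3: "Rm lep E y *\<^sub>v (D\<^sup>T *\<^sub>v u) = 0\<^sub>v (length (active lep E y))"
    using k morph_vec[OF D v] unfolding u_def by (simp add: mat_morph_at_def)
  have e4: "Xm lep E y *\<^sub>v 0\<^sub>v (length (active lep E y)) = 0\<^sub>v (length E)"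
    by (rule mv_zero) simp
  have e5: "Rm lep E z *\<^sub>v 0\<^sub>v (length E) = 0\<^sub>v (length (active lep E z))"
    by (rule mv_zero) simp
  have "D\<^sup>T *\<^sub>v u = 0\<^sub>v (length E)" using e2 e3 e4 by metis
  thus "mat_morph_at lep E' E D z *\<^sub>v (proj_struct lep E' y z *\<^sub>v v) =
       0\<^sub>v (dim_row (mat_morph_at lep E' E D z))" using e1 e5 by (simp add: mat_morph_at_def)
qed (simp add: mat_morph_at_def)



lemma ker_row: fixes r :: "'k::field vec"
  assumes r: "r \<in> carrier_vec n"
  shows "\<exists>K \<in> carrier_mat n n. (\<forall>w\<in>carrier_vec n. r \<bullet> (K *\<^sub>v w) = 0)
     \<and> (\<forall>x\<in>carrier_vec n. r \<bullet> x = 0 \<longrightarrow> K *\<^sub>v x = x)"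
proof (cases "r = 0\<^sub>v n")
  case True
  show ?thesis by (rule bexI[of _ "1\<^sub>m n"]) (auto simp: True)
next
  case False
  then obtain i where i: "i < n" "r $ i \<noteq> 0" using r by (metis eq_vecI carrier_vecD index_zero_vec)
  define K where "K = mat n n (\<lambda>(a,k). (if a = k then 1 else 0) - (if a = i then r$k / r$i else 0))"
  have K: "K \<in> carrier_mat n n" unfolding K_def by simp
  have Kw: "K *\<^sub>v w = w - ((r \<bullet> w) / r $ i) \<cdot>\<^sub>v unit_vec n i" if w: "w \<in> carrier_vec n" for w
  proof (rule eq_vecI)
    fix a assume "a < dim_vec (w - ((r \<bullet> w) / r $ i) \<cdot>\<^sub>v unit_vec n i)"
    hence a: "a < n" using w by simp
    have "(K *\<^sub>v w) $ a = (\<Sum>k<n. ((if a = k then 1 else 0) - (if a = i then r$k / r$i else 0)) * w $ k)"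
      using a w K by (subst mv_entry) (auto simp: K_def intro!: sum.cong)
    also have "\<dots> = (\<Sum>k<n. (if a = k then w $ k else 0)) - (\<Sum>k<n. (if a = i then r$k * w $ k / r$i else 0))"
      by (subst sum_subtractf[symmetric]) (auto intro!: sum.cong)
    also have "\<dots> = w $ a - (if a = i then (\<Sum>k<n. r$k * w $ k) / r$i else 0)"
      using a by (auto simp: sum_divide_distrib)
    also have "(\<Sum>k<n. r$k * w $ k) = r \<bullet> w" using w by (simp add: scalar_prod_def lessThan_atLeast0)
    finally show "(K *\<^sub>v w) $ a = (w - ((r \<bullet> w) / r $ i) \<cdot>\<^sub>v unit_vec n i) $ a"
      using a w by (auto simp: unit_vec_def)
  qed (use w K in auto)
  show ?thesis
  proof (rule bexI[OF _ K], intro conjI ballI impI)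
    fix w :: "'k vec" assume w: "w \<in> carrier_vec n"
    have "r \<bullet> (K *\<^sub>v w) = r \<bullet> w - r \<bullet> (((r \<bullet> w) / r $ i) \<cdot>\<^sub>v unit_vec n i)"
      unfolding Kw[OF w] by (rule scalar_prod_minus_distrib[OF r w]) simp
    also have "\<dots> = 0" using r i w by simp
    finally show "r \<bullet> (K *\<^sub>v w) = 0" .
  next
    fix x :: "'k vec" assume x: "x \<in> carrier_vec n" and "r \<bullet> x = 0"
    thus "K *\<^sub>v x = x" unfolding Kw[OF x] using x by (auto intro!: eq_vecI)
  qed
qed

lemma ker_rows: fixes rs :: "'k::field vec list"
  assumes "\<forall>r\<in>set rs. r \<in> carrier_vec n"
  shows "\<exists>K \<in> carrier_mat n n. (\<forall>w\<in>carrier_vec n. \<forall>r\<in>set rs. r \<bullet> (K *\<^sub>v w) = 0)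
     \<and> (\<forall>x\<in>carrier_vec n. (\<forall>r\<in>set rs. r \<bullet> x = 0) \<longrightarrow> (\<exists>w\<in>carrier_vec n. x = K *\<^sub>v w))"
  using assms
proof (induction rs)
  case Nil
  show ?case by (rule bexI[of _ "1\<^sub>m n"]) auto
next
  case (Cons r rs)
  then obtain K0 where K0: "K0 \<in> carrier_mat n n" and k1: "\<forall>w\<in>carrier_vec n. \<forall>r\<in>set rs. r \<bullet> (K0 *\<^sub>v w) = 0"
    and k2: "\<forall>x\<in>carrier_vec n. (\<forall>r\<in>set rs. r \<bullet> x = 0) \<longrightarrow> (\<exists>w\<in>carrier_vec n. x = K0 *\<^sub>v w)" by auto
  have r: "r \<in> carrier_vec n" using Cons by auto
  define r' where "r' = K0\<^sup>T *\<^sub>v r"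
  have r': "r' \<in> carrier_vec n" using K0 r unfolding r'_def by auto
  have rr': "r \<bullet> (K0 *\<^sub>v w) = r' \<bullet> w" if "w \<in> carrier_vec n" for w
    unfolding r'_def using transpose_vec_mult_scalar[OF K0 that r] by simp
  obtain K1 where K1: "K1 \<in> carrier_mat n n" and l1: "\<forall>w\<in>carrier_vec n. r' \<bullet> (K1 *\<^sub>v w) = 0"
    and l2: "\<forall>x\<in>carrier_vec n. r' \<bullet> x = 0 \<longrightarrow> K1 *\<^sub>v x = x" using ker_row[OF r'] by auto
  show ?case
  proof (rule bexI[of _ "K0 * K1"], intro conjI ballI impI)
    fix w :: "'k vec" and q assume w: "w \<in> carrier_vec n" and q: "q \<in> set (r # rs)"
    have e: "K0 * K1 *\<^sub>v w = K0 *\<^sub>v (K1 *\<^sub>v w)" using K0 K1 w by auto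
    have kw: "K1 *\<^sub>v w \<in> carrier_vec n" using K1 w by auto
    show "q \<bullet> (K0 * K1 *\<^sub>v w) = 0"
    proof (cases "q = r")
      case True thus ?thesis using e rr'[OF kw] l1 w by simp
    next
      case False thus ?thesis using e k1 kw q by auto
    qed
  next
    fix x :: "'k vec" assume x: "x \<in> carrier_vec n" and z: "\<forall>q\<in>set (r # rs). q \<bullet> x = 0"
    then obtain w where w: "w \<in> carrier_vec n" "x = K0 *\<^sub>v w" using k2 by auto
    have "r' \<bullet> w = 0" using rr'[OF w(1)] z w by auto
    hence "K1 *\<^sub>v w = w" using l2 w by auto
    thus "\<exists>w\<in>carrier_vec n. x = K0 * K1 *\<^sub>v w" using w K0 K1 by (intro bexI[of _ w]) auto
  qed (use K0 K1 in auto)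
qed

lemma ker_mat: fixes A :: "'k::field mat"
  assumes A: "A \<in> carrier_mat p n"
  shows "\<exists>K \<in> carrier_mat n n. (\<forall>w\<in>carrier_vec n. A *\<^sub>v (K *\<^sub>v w) = 0\<^sub>v p)
     \<and> (\<forall>x\<in>carrier_vec n. A *\<^sub>v x = 0\<^sub>v p \<longrightarrow> (\<exists>w\<in>carrier_vec n. x = K *\<^sub>v w))"
proof -
  have "\<forall>r\<in>set (rows A). r \<in> carrier_vec n" using A by (auto simp: rows_def)
  from ker_rows[OF this] obtain K where K: "K \<in> carrier_mat n n"
    and k1: "\<forall>w\<in>carrier_vec n. \<forall>r\<in>set (rows A). r \<bullet> (K *\<^sub>v w) = 0"
    and k2: "\<forall>x\<in>carrier_vec n. (\<forall>r\<in>set (rows A). r \<bullet> x = 0) \<longrightarrow> (\<exists>w\<in>carrier_vec n. x = K *\<^sub>v w)" by auto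
  have iff: "A *\<^sub>v x = 0\<^sub>v p \<longleftrightarrow> (\<forall>r\<in>set (rows A). r \<bullet> x = 0)" for x
  proof -
    have "A *\<^sub>v x = 0\<^sub>v p \<longleftrightarrow> (\<forall>i<p. row A i \<bullet> x = 0)"
      using A by (auto simp: vec_eq_iff)
    also have "\<dots> \<longleftrightarrow> (\<forall>r\<in>set (rows A). r \<bullet> x = 0)"
      using A by (auto simp: rows_def)
    finally show ?thesis .
  qed
  show ?thesis using K k1 k2 iff by (intro bexI[OF _ K]) auto
qed

lemma block_sum: fixes g :: "nat \<Rightarrow> 'k::comm_monoid_add"
  assumes "b < L"
  shows "(\<Sum>j<L*m. if j div m = b then g (j mod m) else 0) = (\<Sum>k<m. g k)"
proof (cases "m = 0")
  case True thus ?thesis by simp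
next
  case False
  have "(\<Sum>j<L*m. if j div m = b then g (j mod m) else 0) = (\<Sum>j\<in>{j. j < L*m \<and> j div m = b}. g (j mod m))"
    by (simp add: sum.If_cases Int_def lessThan_def conj_commute)
  also have "{j. j < L*m \<and> j div m = b} = (\<lambda>k. b*m + k) ` {..<m}"
  proof safe
    fix j assume j: "j < L*m" "b = j div m"
    thus "j \<in> (\<lambda>k. j div m * m + k) ` {..<m}"
      using False by (intro image_eqI[of _ _ "j mod m"]) auto
  next
    fix k assume "k < m"
    hence "b*m + k < (b+1)*m" by simp
    also have "(b+1)*m \<le> L*m" using assms by (intro mult_le_mono1) simp
    finally show "b*m + k < L*m" .
    show "(b*m+k) div m = b" using \<open>k < m\<close> by simp
  qed
  also have "(\<Sum>j\<in>(\<lambda>k. b*m + k) ` {..<m}. g (j mod m)) = (\<Sum>k<m. g ((b*m+k) mod m))"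
    by (subst sum.reindex) (auto simp: inj_on_def)
  also have "\<dots> = (\<Sum>k<m. g k)" by simp
  finally show ?thesis .
qed



lemma cover:
  fixes \<phi> :: "'a \<Rightarrow> 'k::field mat"
  assumes fp: "finite_poset X lep" and EX: "set E \<subseteq> X" and cl: "closed_fam X lep E \<phi>"
  shows "\<exists>E' D. set E' \<subseteq> X \<and> D \<in> carrier_mat (length E') (length E) \<and> tri lep E E' D
    \<and> (\<forall>y\<in>X. exact_at (length (active lep E' y)) (length (active lep E y)) (dim_row (\<phi> y))
           (mat_morph_at lep E' E D y) (\<phi> y))
    \<and> closed_fam X lep E' (mat_morph_at lep E' E D)"
proof -
  have finX: "finite X" and rfl: "\<forall>x\<in>X. lep x x"
    and tr: "\<forall>a\<in>X. \<forall>b\<in>X. \<forall>c\<in>X. lep a b \<and> lep b c \<longrightarrow> lep a c"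
    using fp unfolding finite_poset_def by blast+
  define m where "m = length E"
  have clo: "\<And>y z v. y \<in> X \<Longrightarrow> z \<in> X \<Longrightarrow> lep y z \<Longrightarrow> v \<in> carrier_vec (length (active lep E y))
     \<Longrightarrow> \<phi> y *\<^sub>v v = 0\<^sub>v (dim_row (\<phi> y)) \<Longrightarrow> \<phi> z *\<^sub>v (proj_struct lep E y z *\<^sub>v v) = 0\<^sub>v (dim_row (\<phi> z))"
    using cl unfolding closed_fam_def by blast
  have phic: "\<phi> y \<in> carrier_mat (dim_row (\<phi> y)) (length (active lep E y))" if "y \<in> X" for y
    using cl that unfolding closed_fam_def by (auto intro: carrier_matI)
  have exK: "\<forall>y\<in>X. \<exists>K. K \<in> carrier_mat (length (active lep E y)) (length (active lep E y))
     \<and> (\<forall>w\<in>carrier_vec (length (active lep E y)). \<phi> y *\<^sub>v (K *\<^sub>v w) = 0\<^sub>v (dim_row (\<phi> y)))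
     \<and> (\<forall>x\<in>carrier_vec (length (active lep E y)). \<phi> y *\<^sub>v x = 0\<^sub>v (dim_row (\<phi> y))
          \<longrightarrow> (\<exists>w\<in>carrier_vec (length (active lep E y)). x = K *\<^sub>v w))"
    using ker_mat[OF phic] by blast
  obtain Kf where Kf: "\<And>y. y \<in> X \<Longrightarrow> Kf y \<in> carrier_mat (length (active lep E y)) (length (active lep E y))"
    and Kf1: "\<And>y w. y \<in> X \<Longrightarrow> w \<in> carrier_vec (length (active lep E y)) \<Longrightarrow> \<phi> y *\<^sub>v (Kf y *\<^sub>v w) = 0\<^sub>v (dim_row (\<phi> y))"
    and Kf2: "\<And>y x. y \<in> X \<Longrightarrow> x \<in> carrier_vec (length (active lep E y)) \<Longrightarrow> \<phi> y *\<^sub>v x = 0\<^sub>v (dim_row (\<phi> y))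
          \<Longrightarrow> (\<exists>w\<in>carrier_vec (length (active lep E y)). x = Kf y *\<^sub>v w)"
    using bchoice[OF exK] by blast
  define B where "B y = Xm lep E y * Kf y * Rm lep E y" for y
  have Bc: "B y \<in> carrier_mat m m" if "y \<in> X" for y
    unfolding B_def m_def by (rule mult_carrier_mat[OF mult_carrier_mat[OF Xm_carrier Kf[OF that]] Rm_carrier])
  have Bv: "B y *\<^sub>v w = Xm lep E y *\<^sub>v (Kf y *\<^sub>v (Rm lep E y *\<^sub>v w))" if "y \<in> X" "w \<in> carrier_vec m" for y w
  proof -
    have w': "Rm lep E y *\<^sub>v w \<in> carrier_vec (length (active lep E y))" using that(2) by (simp add: m_def)
    have w2: "w \<in> carrier_vec (length E)" using that(2) by (simp add: m_def)
    show ?thesis unfolding B_def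
      by (simp only: assoc_mult_mat_vec[OF mult_carrier_mat[OF Xm_carrier Kf[OF that(1)]] Rm_carrier w2]
        assoc_mult_mat_vec[OF Xm_carrier Kf[OF that(1)] w'])
  qed
  obtain ys where ys: "set ys = X" using finite_list[OF finX] by blast
  define L where "L = length ys"
  define E' where "E' = map (\<lambda>j. ys ! (j div m)) [0..<L*m]"
  define D :: "'k mat" where "D = mat (L*m) m (\<lambda>(j',j). B (ys ! (j' div m)) $$ (j, j' mod m))"
  have lenE': "length E' = L*m" unfolding E'_def by simp
  have divL: "j' div m < L" if "j' < L*m" for j'
    using less_mult_imp_div_less[OF that] .
  have E'nth: "E' ! j' = ys ! (j' div m)" if "j' < L*m" for j'
    unfolding E'_def using that by simp
  have ysX: "ys ! b \<in> X" if "b < L" for b using that ys unfolding L_def by auto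
  have E'X: "set E' \<subseteq> X" unfolding E'_def using ysX divL by auto
  have E'jX: "E' ! j' \<in> X" if "j' < L*m" for j' using E'nth[OF that] ysX[OF divL[OF that]] by simp
  have Dc: "D \<in> carrier_mat (length E') (length E)" unfolding D_def lenE' m_def by simp
  have modm: "j' mod m < m" if "j' < L*m" for j'
    using that by (cases "m = 0") auto
  have Bsupp: "supp lep E y (B y *\<^sub>v w)" if "y \<in> X" "w \<in> carrier_vec m" for y w
    unfolding Bv[OF that] by (rule supp_X) (use Kf[OF that(1)] that in \<open>auto simp: m_def\<close>)
  have DT_unit: "D\<^sup>T *\<^sub>v unit_vec (L*m) j' = B (E' ! j') *\<^sub>v unit_vec m (j' mod m)" if j': "j' < L*m" for j'
  proof (rule eq_vecI)
    have BX: "B (E' ! j') \<in> carrier_mat m m" using Bc[OF E'jX[OF j']] .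
    fix j assume "j < dim_vec (B (E' ! j') *\<^sub>v unit_vec m (j' mod m))"
    hence j: "j < m" using BX by simp
    have "(D\<^sup>T *\<^sub>v unit_vec (L*m) j') $ j = D\<^sup>T $$ (j, j')"
      by (rule mv_unit) (use j j' Dc lenE' m_def in auto)
    also have "\<dots> = B (E' ! j') $$ (j, j' mod m)" using j j' E'nth unfolding D_def by simp
    also have "\<dots> = (B (E' ! j') *\<^sub>v unit_vec m (j' mod m)) $ j"
      by (rule mv_unit[symmetric]) (use BX modm j' j in auto)
    finally show "(D\<^sup>T *\<^sub>v unit_vec (L*m) j') $ j = (B (E' ! j') *\<^sub>v unit_vec m (j' mod m)) $ j" .
  qed (use Dc lenE' m_def Bc[OF E'jX[OF j']] in simp)
  have t: "tri lep E E' D" unfolding tri_def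
  proof (intro allI impI)
    fix r c assume r: "r < length E'" and c: "c < length E" and nl: "\<not> lep (E ! c) (E' ! r)"
    have r': "r < L*m" using r lenE' by simp
    have y: "E' ! r \<in> X" using E'jX[OF r'] .
    have "D $$ (r,c) = B (E' ! r) $$ (c, r mod m)" using r' c E'nth unfolding D_def m_def by simp
    also have "\<dots> = (B (E' ! r) *\<^sub>v unit_vec m (r mod m)) $ c"
      by (rule mv_unit[symmetric]) (use Bc[OF y] modm r' c m_def in auto)
    also have "\<dots> = 0" using Bsupp[OF y, of "unit_vec m (r mod m)"] nl c unfolding supp_def by auto
    finally show "D $$ (r,c) = 0" .
  qed
  have ex: "exact_at (length (active lep E' y)) (length (active lep E y)) (dim_row (\<phi> y))
           (mat_morph_at lep E' E D y) (\<phi> y)" if y: "y \<in> X" for y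
    unfolding exact_at_def
  proof (intro ballI iffI)
    fix x assume x: "x \<in> carrier_vec (length (active lep E y))" and k: "\<phi> y *\<^sub>v x = 0\<^sub>v (dim_row (\<phi> y))"
    obtain w0 where w0: "w0 \<in> carrier_vec (length (active lep E y))" "x = Kf y *\<^sub>v w0" using Kf2[OF y x k] by blast
    obtain b where b: "b < L" "ys ! b = y" using y ys in_set_conv_nth[of y ys] unfolding L_def by auto
    define w where "w = Xm lep E y *\<^sub>v w0"
    have w: "w \<in> carrier_vec m" unfolding w_def m_def using w0 by simp
    have Bw: "B y *\<^sub>v w = Xm lep E y *\<^sub>v x"
      unfolding Bv[OF y w] unfolding w_def RX[OF w0(1)] w0(2) ..
    define z' where "z' = vec (L*m) (\<lambda>j'. if j' div m = b then w $ (j' mod m) else 0)"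
    have z'c: "z' \<in> carrier_vec (length E')" unfolding z'_def lenE' by simp
    have Dz: "D\<^sup>T *\<^sub>v z' = B y *\<^sub>v w"
    proof (rule eq_vecI)
      fix j assume "j < dim_vec (B y *\<^sub>v w)"
      hence j: "j < m" using Bc[OF y] by simp
      have "(D\<^sup>T *\<^sub>v z') $ j = (\<Sum>j'<L*m. D\<^sup>T $$ (j,j') * z' $ j')"
        using j Dc z'c lenE' m_def by (subst mv_entry) auto
      also have "\<dots> = (\<Sum>j'<L*m. if j' div m = b then B y $$ (j, j' mod m) * w $ (j' mod m) else 0)"
        using j b unfolding D_def z'_def by (auto intro!: sum.cong)
      also have "\<dots> = (\<Sum>k<m. B y $$ (j, k) * w $ k)" by (rule block_sum[OF b(1)])
      also have "\<dots> = (B y *\<^sub>v w) $ j" using j Bc[OF y] w by (subst mv_entry) auto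
      finally show "(D\<^sup>T *\<^sub>v z') $ j = (B y *\<^sub>v w) $ j" .
    qed (use Dc Bc[OF y] m_def in auto)
    have sz: "supp lep E' y z'" unfolding supp_def
    proof (intro allI impI)
      fix j' assume j': "j' < length E'" and "z' $ j' \<noteq> 0"
      hence "j' div m = b" using lenE' unfolding z'_def by (auto split: if_splits)
      thus "lep (E' ! j') y" using E'nth j' lenE' b rfl y by auto
    qed
    define z where "z = Rm lep E' y *\<^sub>v z'"
    have zc: "z \<in> carrier_vec (length (active lep E' y))" unfolding z_def using z'c by simp
    have "mat_morph_at lep E' E D y *\<^sub>v z = Rm lep E y *\<^sub>v (D\<^sup>T *\<^sub>v z')"
      unfolding morph_vec[OF Dc zc] unfolding z_def XR[OF z'c sz] ..
    also have "\<dots> = x" unfolding Dz Bw by (rule RX[OF x])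
    finally have "x = mat_morph_at lep E' E D y *\<^sub>v z" by simp
    thus "\<exists>z\<in>carrier_vec (length (active lep E' y)). x = mat_morph_at lep E' E D y *\<^sub>v z"
      using zc by blast
  next
    fix x assume x: "x \<in> carrier_vec (length (active lep E y))"
      and "\<exists>z\<in>carrier_vec (length (active lep E' y)). x = mat_morph_at lep E' E D y *\<^sub>v z"
    then obtain z where z: "z \<in> carrier_vec (length (active lep E' y))" "x = mat_morph_at lep E' E D y *\<^sub>v z" by blast
    have Tc: "\<phi> y * mat_morph_at lep E' E D y \<in> carrier_mat (dim_row (\<phi> y)) (length (active lep E' y))"
      by (rule mult_carrier_mat[OF phic[OF y]]) (simp add: mat_morph_at_def)
    have "(\<phi> y * mat_morph_at lep E' E D y) *\<^sub>v z = 0\<^sub>v (dim_row (\<phi> y))"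
    proof (rule zero_by_units[OF Tc _ z(1)])
      fix c assume c: "c < length (active lep E' y)"
      let ?j' = "active lep E' y ! c"
      have j': "?j' < L*m" using active_lt[OF c] lenE' by simp
      have yy: "lep (E' ! ?j') y" using active_lep[OF c] .
      have y': "E' ! ?j' \<in> X" using E'jX[OF j'] .
      have Xu: "Xm lep E' y *\<^sub>v unit_vec (length (active lep E' y)) c = unit_vec (L*m) ?j'"
      proof (rule eq_vecI)
        fix j assume "j < dim_vec (unit_vec (L*m) ?j')"
        hence j: "j < L*m" by simp
        show "(Xm lep E' y *\<^sub>v unit_vec (length (active lep E' y)) c) $ j = unit_vec (L*m) ?j' $ j"
          using mv_unit[OF Xm_carrier c, of j] j lenE' c by (auto simp: Xm_def unit_vec_def)
      qed (simp add: lenE')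
      define k :: "'k vec" where "k = Rm lep E (E' ! ?j') *\<^sub>v unit_vec m (?j' mod m)"
      have kc: "k \<in> carrier_vec (length (active lep E (E' ! ?j')))" unfolding k_def m_def by simp
      define xx where "xx = Kf (E' ! ?j') *\<^sub>v k"
      have xxc: "xx \<in> carrier_vec (length (active lep E (E' ! ?j')))" unfolding xx_def using Kf[OF y'] kc by simp
      have xx0: "\<phi> (E' ! ?j') *\<^sub>v xx = 0\<^sub>v (dim_row (\<phi> (E' ! ?j')))" unfolding xx_def by (rule Kf1[OF y' kc])
      have "mat_morph_at lep E' E D y *\<^sub>v unit_vec (length (active lep E' y)) c
          = Rm lep E y *\<^sub>v (D\<^sup>T *\<^sub>v unit_vec (L*m) ?j')"
        using morph_vec[OF Dc, of "unit_vec (length (active lep E' y)) c" lep y] unfolding Xu by simp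
      also have "\<dots> = Rm lep E y *\<^sub>v (Xm lep E (E' ! ?j') *\<^sub>v xx)"
        unfolding DT_unit[OF j'] Bv[OF y' unit_vec_carrier] xx_def k_def ..
      also have "\<dots> = proj_struct lep E (E' ! ?j') y *\<^sub>v xx" using proj_struct_vec[OF xxc] by simp
      finally have "(\<phi> y * mat_morph_at lep E' E D y) *\<^sub>v unit_vec (length (active lep E' y)) c
           = \<phi> y *\<^sub>v (proj_struct lep E (E' ! ?j') y *\<^sub>v xx)"
        using phic[OF y] by (subst assoc_mult_mat_vec) (auto simp: mat_morph_at_def)
      also have "\<dots> = 0\<^sub>v (dim_row (\<phi> y))"
        by (rule clo[OF y' y yy xxc xx0])
      finally show "(\<phi> y * mat_morph_at lep E' E D y) *\<^sub>v unit_vec (length (active lep E' y)) c = 0\<^sub>v (dim_row (\<phi> y))" .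
    qed
    moreover have "(\<phi> y * mat_morph_at lep E' E D y) *\<^sub>v z = \<phi> y *\<^sub>v (mat_morph_at lep E' E D y *\<^sub>v z)"
      by (rule assoc_mult_mat_vec[OF phic[OF y] _ z(1)]) (simp add: mat_morph_at_def)
    ultimately show "\<phi> y *\<^sub>v x = 0\<^sub>v (dim_row (\<phi> y))" using z(2) by simp
  qed
  show ?thesis
    by (intro exI[of _ E'] exI[of _ D] conjI E'X Dc t ballI ex closed_next[OF fp Dc t EX E'X])
qed



lemma initial:
  fixes M :: "('a, 'k::field) pmod"
  assumes fp: "finite_poset X lep" and pm: "is_pmod X lep M"
  shows "\<exists>E0 \<epsilon>. set E0 \<subseteq> X
    \<and> (\<forall>y\<in>X. \<epsilon> y \<in> carrier_mat (fst M y) (length (active lep E0 y)))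
    \<and> (\<forall>y\<in>X. \<forall>z\<in>X. lep y z \<longrightarrow> \<epsilon> z * proj_struct lep E0 y z = snd M y z * \<epsilon> y)
    \<and> (\<forall>y\<in>X. \<forall>v\<in>carrier_vec (fst M y). \<exists>x\<in>carrier_vec (length (active lep E0 y)). \<epsilon> y *\<^sub>v x = v)
    \<and> closed_fam X lep E0 \<epsilon>"
proof -
  have finX: "finite X" and rfl: "\<forall>x\<in>X. lep x x"
    and tr: "\<forall>a\<in>X. \<forall>b\<in>X. \<forall>c\<in>X. lep a b \<and> lep b c \<longrightarrow> lep a c"
    using fp unfolding finite_poset_def by blast+
  have Mc: "\<And>x y. x \<in> X \<Longrightarrow> y \<in> X \<Longrightarrow> lep x y \<Longrightarrow> snd M x y \<in> carrier_mat (fst M y) (fst M x)"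
    and Mid: "\<And>x. x \<in> X \<Longrightarrow> snd M x x = 1\<^sub>m (fst M x)"
    and Mcomp: "\<And>x y z. x \<in> X \<Longrightarrow> y \<in> X \<Longrightarrow> z \<in> X \<Longrightarrow> lep x y \<Longrightarrow> lep y z \<Longrightarrow> snd M x z = snd M y z * snd M x y"
    using pm unfolding is_pmod_def by blast+
  define d where "d = fst M"
  define m where "m = (\<Sum>y\<in>X. d y)"
  have dm: "d y \<le> m" if "y \<in> X" for y unfolding m_def by (rule member_le_sum[OF that _ finX]) auto
  obtain ys where ys: "set ys = X" using finite_list[OF finX] by blast
  define L where "L = length ys"
  define E0 where "E0 = map (\<lambda>j. ys ! (j div m)) [0..<L*m]"
  have lenE0: "length E0 = L*m" unfolding E0_def by simp
  have divL: "j div m < L" if "j < L*m" for j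
    using less_mult_imp_div_less[OF that] .
  have E0nth: "E0 ! j = ys ! (j div m)" if "j < L*m" for j unfolding E0_def using that by simp
  have ysX: "ys ! b \<in> X" if "b < L" for b using that ys unfolding L_def by auto
  have E0X: "set E0 \<subseteq> X" unfolding E0_def using ysX divL by auto
  have E0jX: "E0 ! j \<in> X" if "j < L*m" for j using E0nth[OF that] ysX[OF divL[OF that]] by simp
  define G :: "'a \<Rightarrow> 'k mat" where "G y = mat (d y) (L*m) (\<lambda>(r,j).
     if j mod m < d (E0 ! j) \<and> lep (E0 ! j) y then snd M (E0 ! j) y $$ (r, j mod m) else 0)" for y
  define \<epsilon> where "\<epsilon> y = G y * Xm lep E0 y" for y
  have Gc: "G y \<in> carrier_mat (d y) (L*m)" for y unfolding G_def by simp
  have Gd[simp]: "dim_row (G y) = d y" "dim_col (G y) = L*m" for y unfolding G_def by simp_all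
  have ec: "\<epsilon> y \<in> carrier_mat (d y) (length (active lep E0 y))" for y
    unfolding \<epsilon>_def using mult_carrier_mat[OF Gc Xm_carrier[of lep E0 y, unfolded lenE0]] .
  have ev: "\<epsilon> y *\<^sub>v v = G y *\<^sub>v (Xm lep E0 y *\<^sub>v v)" if "v \<in> carrier_vec (length (active lep E0 y))" for y v
    unfolding \<epsilon>_def using assoc_mult_mat_vec[OF Gc[of y] Xm_carrier[of lep E0 y, unfolded lenE0] that] .
  have psc: "proj_struct lep E0 y z \<in> carrier_mat (length (active lep E0 z)) (length (active lep E0 y))" for y z
    by (simp add: proj_struct_def)
  have GMu: "G z *\<^sub>v u = snd M y z *\<^sub>v (G y *\<^sub>v u)"
    if y: "y \<in> X" and z: "z \<in> X" and yz: "lep y z" and u: "u \<in> carrier_vec (L*m)" and su: "supp lep E0 y u" for y z u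
  proof -
    have MG: "snd M y z *\<^sub>v (G y *\<^sub>v u) = (snd M y z * G y) *\<^sub>v u"
      using assoc_mult_mat_vec[OF Mc[OF y z yz] Gc[of y, unfolded d_def] u] by simp
    have MGc: "snd M y z * G y \<in> carrier_mat (d z) (L*m)" using Mc[OF y z yz] Gc unfolding d_def by auto
    have Md[simp]: "dim_row (snd M y z) = d z" "dim_col (snd M y z) = d y" using Mc[OF y z yz] unfolding d_def by auto
    show ?thesis unfolding MG
    proof (rule eq_vecI)
      fix r assume "r < dim_vec ((snd M y z * G y) *\<^sub>v u)"
      hence r: "r < d z" using carrier_matD(1)[OF MGc] by simp
      have "(G z *\<^sub>v u) $ r = (\<Sum>j<L*m. G z $$ (r,j) * u $ j)" using r Gc u by (subst mv_entry) auto
      also have "\<dots> = (\<Sum>j<L*m. (snd M y z * G y) $$ (r,j) * u $ j)"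
      proof (rule sum.cong[OF refl])
        fix j assume "j \<in> {..<L*m}"
        hence j: "j < L*m" by simp
        show "G z $$ (r,j) * u $ j = (snd M y z * G y) $$ (r,j) * u $ j"
        proof (cases "u $ j = 0")
          case False
          hence y'y: "lep (E0 ! j) y" using su j lenE0 unfolding supp_def by auto
          have y'X: "E0 ! j \<in> X" using E0jX[OF j] .
          have y'z: "lep (E0 ! j) z" using tr y'X y z y'y yz by blast
          have "(snd M y z * G y) $$ (r,j) = row (snd M y z) r \<bullet> col (G y) j"
            using r j MGc Gc by (subst index_mult_mat) auto
          also have "\<dots> = G z $$ (r,j)"
          proof (cases "j mod m < d (E0 ! j)")
            case True
            have "col (G y) j = col (snd M (E0 ! j) y) (j mod m)"
              using True y'y Mc[OF y'X y y'y] j unfolding G_def d_def by (auto intro!: eq_vecI)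
            hence "row (snd M y z) r \<bullet> col (G y) j = (snd M y z * snd M (E0 ! j) y) $$ (r, j mod m)"
              using Mc[OF y'X y y'y] Mc[OF y z yz] r True unfolding d_def by auto
            also have "\<dots> = snd M (E0 ! j) z $$ (r, j mod m)" using Mcomp[OF y'X y z y'y yz] by simp
            finally show ?thesis using True y'z r j unfolding G_def by simp
          next
            case False
            have "col (G y) j = 0\<^sub>v (d y)" using False j unfolding G_def by (auto intro!: eq_vecI)
            thus ?thesis using False r j Mc[OF y z yz] unfolding G_def d_def by (auto simp: row_def)
          qed
          finally show ?thesis by simp
        qed simp
      qed
      also have "\<dots> = ((snd M y z * G y) *\<^sub>v u) $ r" using r MGc u by (subst mv_entry) auto
      finally show "(G z *\<^sub>v u) $ r = ((snd M y z * G y) *\<^sub>v u) $ r" .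
    qed (use MGc Gc in auto)
  qed
  have nat: "\<epsilon> z * proj_struct lep E0 y z = snd M y z * \<epsilon> y"
    if y: "y \<in> X" and z: "z \<in> X" and yz: "lep y z" for y z
  proof (rule mat_eq_vecI)
    show "\<epsilon> z * proj_struct lep E0 y z \<in> carrier_mat (d z) (length (active lep E0 y))"
      by (rule mult_carrier_mat[OF ec psc])
    show "snd M y z * \<epsilon> y \<in> carrier_mat (d z) (length (active lep E0 y))"
      by (rule mult_carrier_mat[OF Mc[OF y z yz, folded d_def] ec])
    fix v :: "'k vec" assume v: "v \<in> carrier_vec (length (active lep E0 y))"
    define u where "u = Xm lep E0 y *\<^sub>v v"
    have u: "u \<in> carrier_vec (L*m)" "supp lep E0 y u" using Xm_mult_carrier[OF v] supp_X[OF v] unfolding u_def lenE0 by auto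
    have uz: "supp lep E0 z u" using supp_mono[OF u(2) E0X y z tr yz] .
    have pc: "proj_struct lep E0 y z *\<^sub>v v \<in> carrier_vec (length (active lep E0 z))"
      by (rule mult_mat_vec_carrier[OF psc v])
    have pv: "proj_struct lep E0 y z *\<^sub>v v = Rm lep E0 z *\<^sub>v u" unfolding u_def by (rule proj_struct_vec[OF v])
    have xr: "Xm lep E0 z *\<^sub>v (Rm lep E0 z *\<^sub>v u) = u" by (rule XR[OF u(1)[folded lenE0] uz])
    have "(\<epsilon> z * proj_struct lep E0 y z) *\<^sub>v v = \<epsilon> z *\<^sub>v (proj_struct lep E0 y z *\<^sub>v v)"
      by (rule assoc_mult_mat_vec[OF ec psc v])
    also have "\<dots> = G z *\<^sub>v u" by (subst ev[OF pc]) (simp only: pv xr)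
    also have "\<dots> = snd M y z *\<^sub>v (\<epsilon> y *\<^sub>v v)" unfolding ev[OF v] u_def[symmetric] using GMu[OF y z yz u(1) u(2)] .
    also have "\<dots> = (snd M y z * \<epsilon> y) *\<^sub>v v"
      by (rule assoc_mult_mat_vec[OF Mc[OF y z yz, folded d_def] ec v, symmetric])
    finally show "(\<epsilon> z * proj_struct lep E0 y z) *\<^sub>v v = (snd M y z * \<epsilon> y) *\<^sub>v v" .
  qed
  have surj: "\<exists>x\<in>carrier_vec (length (active lep E0 y)). \<epsilon> y *\<^sub>v x = v"
    if y: "y \<in> X" and v: "v \<in> carrier_vec (d y)" for y v
  proof -
    obtain b where b: "b < L" "ys ! b = y" using y ys in_set_conv_nth[of y ys] unfolding L_def by auto
    define z' where "z' = vec (L*m) (\<lambda>j. if j div m = b then (if j mod m < d y then v $ (j mod m) else 0) else 0)"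
    have z'c: "z' \<in> carrier_vec (length E0)" unfolding z'_def lenE0 by simp
    have sz: "supp lep E0 y z'" unfolding supp_def
    proof (intro allI impI)
      fix j assume j: "j < length E0" and "z' $ j \<noteq> 0"
      hence "j div m = b" using lenE0 unfolding z'_def by (auto split: if_splits)
      thus "lep (E0 ! j) y" using E0nth j lenE0 b rfl y by auto
    qed
    define x where "x = Rm lep E0 y *\<^sub>v z'"
    have xc: "x \<in> carrier_vec (length (active lep E0 y))" unfolding x_def using z'c by simp
    have "\<epsilon> y *\<^sub>v x = G y *\<^sub>v z'" by (subst ev[OF xc]) (simp only: x_def XR[OF z'c sz])
    also have "\<dots> = v"
    proof (rule eq_vecI)
      fix r assume "r < dim_vec v"
      hence r: "r < d y" using v by simp
      have "(G y *\<^sub>v z') $ r = (\<Sum>j<L*m. G y $$ (r,j) * z' $ j)" using r Gc z'c lenE0 by (subst mv_entry) auto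
      also have "\<dots> = (\<Sum>j<L*m. if j div m = b then (if j mod m < d y then 1\<^sub>m (d y) $$ (r, j mod m) * v $ (j mod m) else 0) else 0)"
        using r b rfl y E0nth Mid[OF y] unfolding G_def z'_def d_def by (auto intro!: sum.cong)
      also have "\<dots> = (\<Sum>k<m. if k < d y then 1\<^sub>m (d y) $$ (r, k) * v $ k else 0)" by (rule block_sum[OF b(1)])
      also have "\<dots> = (\<Sum>k<m. if k = r then v $ k else 0)" using r by (intro sum.cong) auto
      also have "\<dots> = v $ r" using r dm[OF y] by simp
      finally show "(G y *\<^sub>v z') $ r = v $ r" .
    qed (use v Gc in auto)
    finally show ?thesis using xc by blast
  qed
  have cl: "closed_fam X lep E0 \<epsilon>" unfolding closed_fam_def
  proof (intro conjI ballI impI)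
    fix y assume "y \<in> X" thus "dim_col (\<epsilon> y) = length (active lep E0 y)" using ec by auto
  next
    fix y z v assume y: "y \<in> X" and z: "z \<in> X" and yz: "lep y z"
      and v: "v \<in> carrier_vec (length (active lep E0 y))" and k: "\<epsilon> y *\<^sub>v v = 0\<^sub>v (dim_row (\<epsilon> y))"
    have "\<epsilon> z *\<^sub>v (proj_struct lep E0 y z *\<^sub>v v) = (\<epsilon> z * proj_struct lep E0 y z) *\<^sub>v v"
      by (rule assoc_mult_mat_vec[OF ec psc v, symmetric])
    also have "\<dots> = snd M y z *\<^sub>v (\<epsilon> y *\<^sub>v v)" unfolding nat[OF y z yz]
      by (rule assoc_mult_mat_vec[OF Mc[OF y z yz, folded d_def] ec v])
    also have "\<dots> = 0\<^sub>v (d z)" using k mv_zero[OF Mc[OF y z yz]] carrier_matD(1)[OF ec[of y]] unfolding d_def by simp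
    finally show "\<epsilon> z *\<^sub>v (proj_struct lep E0 y z *\<^sub>v v) = 0\<^sub>v (dim_row (\<epsilon> z))" using carrier_matD(1)[OF ec[of z]] by simp
  qed
  show ?thesis
    apply (rule exI[of _ E0], rule exI[of _ \<epsilon>])
    using E0X ec nat surj cl unfolding d_def by blast
qed



definition cprops :: "'a set \<Rightarrow> ('a \<Rightarrow> 'a \<Rightarrow> bool) \<Rightarrow> 'a list \<Rightarrow> ('a \<Rightarrow> 'k::field mat) \<Rightarrow> 'a list \<Rightarrow> 'k mat \<Rightarrow> bool" where
  "cprops X lep E \<phi> E' D \<longleftrightarrow> set E' \<subseteq> X \<and> D \<in> carrier_mat (length E') (length E) \<and> tri lep E E' D
    \<and> (\<forall>y\<in>X. exact_at (length (active lep E' y)) (length (active lep E y)) (dim_row (\<phi> y))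
           (mat_morph_at lep E' E D y) (\<phi> y))
    \<and> closed_fam X lep E' (mat_morph_at lep E' E D)"

definition cov :: "'a set \<Rightarrow> ('a \<Rightarrow> 'a \<Rightarrow> bool) \<Rightarrow> 'a list \<Rightarrow> ('a \<Rightarrow> 'k::field mat) \<Rightarrow> 'a list \<times> 'k mat" where
  "cov X lep E \<phi> = (SOME p. cprops X lep E \<phi> (fst p) (snd p))"

lemma cov_props: "finite_poset X lep \<Longrightarrow> set E \<subseteq> X \<Longrightarrow> closed_fam X lep E \<phi> \<Longrightarrow>
   cprops X lep E \<phi> (fst (cov X lep E \<phi>)) (snd (cov X lep E \<phi>))"
  unfolding cov_def
  by (rule someI_ex) (use cover[of X lep E \<phi>] in \<open>auto simp: cprops_def\<close>)

lemma proj_res_exists: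
  fixes M :: "('a, 'k::field) pmod"
  assumes fp: "finite_poset X lep" and pm: "is_pmod X lep M"
  shows "\<exists>E D. is_proj_res X lep M E D"
proof -
  obtain E0 and \<epsilon> :: "'a \<Rightarrow> 'k mat" where E0X: "set E0 \<subseteq> X"
    and ec: "\<forall>y\<in>X. \<epsilon> y \<in> carrier_mat (fst M y) (length (active lep E0 y))"
    and nat: "\<forall>y\<in>X. \<forall>z\<in>X. lep y z \<longrightarrow> \<epsilon> z * proj_struct lep E0 y z = snd M y z * \<epsilon> y"
    and surj: "\<forall>y\<in>X. \<forall>v\<in>carrier_vec (fst M y). \<exists>x\<in>carrier_vec (length (active lep E0 y)). \<epsilon> y *\<^sub>v x = v"
    and cl0: "closed_fam X lep E0 \<epsilon>"
    using initial[OF fp pm] by blast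
  define step :: "nat \<Rightarrow> 'a list \<times> ('a \<Rightarrow> 'k mat) \<times> 'k mat \<Rightarrow> 'a list \<times> ('a \<Rightarrow> 'k mat) \<times> 'k mat" where
    "step = (\<lambda>n s. (fst (cov X lep (fst s) (fst (snd s))),
       mat_morph_at lep (fst (cov X lep (fst s) (fst (snd s)))) (fst s) (snd (cov X lep (fst s) (fst (snd s)))),
       snd (cov X lep (fst s) (fst (snd s)))))"
  define st where "st = rec_nat (E0, \<epsilon>, 0\<^sub>m 0 0) step"
  have st0: "st 0 = (E0, \<epsilon>, 0\<^sub>m 0 0)" unfolding st_def by simp
  have stS: "st (Suc n) = step n (st n)" for n unfolding st_def by simp
  have inv: "set (fst (st n)) \<subseteq> X \<and> closed_fam X lep (fst (st n)) (fst (snd (st n)))" for n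
  proof (induction n)
    case 0 thus ?case using st0 E0X cl0 by simp
  next
    case (Suc n)
    have "cprops X lep (fst (st n)) (fst (snd (st n))) (fst (cov X lep (fst (st n)) (fst (snd (st n))))) (snd (cov X lep (fst (st n)) (fst (snd (st n)))))"
      using cov_props[OF fp] Suc by blast
    thus ?case unfolding stS step_def cprops_def by simp
  qed
  have cp: "cprops X lep (fst (st n)) (fst (snd (st n))) (fst (st (Suc n))) (snd (snd (st (Suc n))))" for n
    using cov_props[OF fp conjunct1[OF inv[of n]] conjunct2[OF inv[of n]]] unfolding stS step_def by simp
  have phiS: "fst (snd (st (Suc n))) = mat_morph_at lep (fst (st (Suc n))) (fst (st n)) (snd (snd (st (Suc n))))" for n
    unfolding stS step_def by simp
  define E where "E i = fst (st i)" for i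
  define D where "D i = snd (snd (st (Suc i)))" for i
  have "is_proj_res X lep M E D"
    unfolding is_proj_res_def
  proof (intro conjI exI[of _ \<epsilon>])
    show "\<forall>i. set (E i) \<subseteq> X" using inv unfolding E_def by blast
  next
    show "\<forall>i. D i \<in> carrier_mat (length (E (Suc i))) (length (E i))"
      using cp unfolding cprops_def E_def D_def by blast
  next
    show "\<forall>i. \<forall>r<length (E (Suc i)). \<forall>c<length (E i). \<not> lep (E i ! c) (E (Suc i) ! r) \<longrightarrow> D i $$ (r, c) = 0"
      using cp unfolding cprops_def tri_def E_def D_def by blast
  next
    show "\<forall>y\<in>X. \<epsilon> y \<in> carrier_mat (fst M y) (length (active lep (E 0) y))" using ec st0 unfolding E_def by simp
    show "\<forall>y\<in>X. \<forall>z\<in>X. lep y z \<longrightarrow> \<epsilon> z * proj_struct lep (E 0) y z = snd M y z * \<epsilon> y"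
      using nat st0 unfolding E_def by simp
    show "\<forall>y\<in>X. \<forall>v\<in>carrier_vec (fst M y). \<exists>x\<in>carrier_vec (length (active lep (E 0) y)). \<epsilon> y *\<^sub>v x = v"
      using surj st0 unfolding E_def by simp
    show "\<forall>y\<in>X. exact_at (length (active lep (E 1) y)) (length (active lep (E 0) y)) (fst M y)
              (mat_morph_at lep (E 1) (E 0) (D 0) y) (\<epsilon> y)"
    proof
      fix y assume y: "y \<in> X"
      have "dim_row (\<epsilon> y) = fst M y" using ec y by auto
      thus "exact_at (length (active lep (E 1) y)) (length (active lep (E 0) y)) (fst M y)
              (mat_morph_at lep (E 1) (E 0) (D 0) y) (\<epsilon> y)"
        using cp[of 0] y st0 unfolding cprops_def E_def D_def by auto
    qed
    show "\<forall>y\<in>X. \<forall>i. exact_at (length (active lep (E (Suc (Suc i))) y))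
              (length (active lep (E (Suc i)) y)) (length (active lep (E i) y))
              (mat_morph_at lep (E (Suc (Suc i))) (E (Suc i)) (D (Suc i)) y)
              (mat_morph_at lep (E (Suc i)) (E i) (D i) y)"
    proof (intro ballI allI)
      fix y i assume y: "y \<in> X"
      have "exact_at (length (active lep (E (Suc (Suc i))) y)) (length (active lep (E (Suc i)) y))
          (dim_row (fst (snd (st (Suc i))) y))
          (mat_morph_at lep (E (Suc (Suc i))) (E (Suc i)) (D (Suc i)) y) (fst (snd (st (Suc i))) y)"
        using cp[of "Suc i"] y unfolding cprops_def E_def D_def by auto
      thus "exact_at (length (active lep (E (Suc (Suc i))) y))
              (length (active lep (E (Suc i)) y)) (length (active lep (E i) y))
              (mat_morph_at lep (E (Suc (Suc i))) (E (Suc i)) (D (Suc i)) y)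
              (mat_morph_at lep (E (Suc i)) (E i) (D i) y)"
        unfolding phiS E_def D_def by (simp add: mat_morph_at_def)
    qed
  qed
  thus ?thesis by blast
qed



lemma inv_facts: assumes A: "(A :: 'k::field mat) \<in> carrier_mat n' n" and i: "invertible_mat A"
  shows "n' = n \<and> (\<exists>B \<in> carrier_mat n n. A * B = 1\<^sub>m n \<and> B * A = 1\<^sub>m n)"
proof -
  from i obtain B where sq: "square_mat A" and AB: "A * B = 1\<^sub>m (dim_row A)" and BA: "B * A = 1\<^sub>m (dim_row B)"
    unfolding invertible_mat_def inverts_mat_def by blast
  have nn: "n' = n" using sq A by (auto simp: square_mat.simps)
  have "dim_col B = n'" using AB A by (metis index_mult_mat(3) index_one_mat(3) carrier_matD(1))
  moreover have "dim_row B = n" using BA A by (metis index_mult_mat(3) index_one_mat(3) carrier_matD(2))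
  ultimately show ?thesis using AB BA A nn by (intro conjI bexI[of _ B]) auto
qed

lemma active_map: assumes "set xs \<subseteq> Q" "y \<in> P" "\<forall>u\<in>Q. \<forall>x\<in>P. lep (f u) x \<longleftrightarrow> leQ u (g x)"
  shows "active lep (map f xs) y = active leQ xs (g y)"
  unfolding active_def using assms by (auto intro!: filter_cong dest!: nth_mem)

lemma transfer:
  fixes \<Gamma> :: "(nat, 'k::field) pmod" and M :: "('p, 'k) pmod"
  assumes gi: "galois_insertion Q leQ P lep f g" and pmG: "is_pmod Q leQ \<Gamma>"
    and res: "is_proj_res Q leQ \<Gamma> E D" and pmM: "is_pmod P lep M" and iso: "pmod_iso P lep (pullback g \<Gamma>) M"
  shows "is_proj_res P lep M (\<lambda>i. map f (E i)) D"
proof -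
  have fQ: "\<And>u. u \<in> Q \<Longrightarrow> f u \<in> P" and gP: "\<And>x. x \<in> P \<Longrightarrow> g x \<in> Q"
    and fmono: "\<And>u v. u \<in> Q \<Longrightarrow> v \<in> Q \<Longrightarrow> leQ u v \<Longrightarrow> lep (f u) (f v)"
    and gmono: "\<And>x y. x \<in> P \<Longrightarrow> y \<in> P \<Longrightarrow> lep x y \<Longrightarrow> leQ (g x) (g y)"
    and adj: "\<forall>u\<in>Q. \<forall>x\<in>P. lep (f u) x \<longleftrightarrow> leQ u (g x)"
    using gi unfolding galois_insertion_def monotone_betw_def by blast+
  have Gc: "\<And>x y. x \<in> Q \<Longrightarrow> y \<in> Q \<Longrightarrow> leQ x y \<Longrightarrow> snd \<Gamma> x y \<in> carrier_mat (fst \<Gamma> y) (fst \<Gamma> x)"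
    using pmG unfolding is_pmod_def by blast
  obtain \<phi> where \<phi>c: "\<And>x. x \<in> P \<Longrightarrow> \<phi> x \<in> carrier_mat (fst M x) (fst \<Gamma> (g x))"
    and \<phi>i: "\<And>x. x \<in> P \<Longrightarrow> invertible_mat (\<phi> x)"
    and \<phi>n: "\<And>x y. x \<in> P \<Longrightarrow> y \<in> P \<Longrightarrow> lep x y \<Longrightarrow> \<phi> y * snd \<Gamma> (g x) (g y) = snd M x y * \<phi> x"
    using iso unfolding pmod_iso_def pullback_def by auto
  have EQ: "\<And>i. set (E i) \<subseteq> Q" and Dc: "\<And>i. D i \<in> carrier_mat (length (E (Suc i))) (length (E i))"
    and Dt: "\<And>i. \<forall>r < length (E (Suc i)). \<forall>c < length (E i).
          \<not> leQ (E i ! c) (E (Suc i) ! r) \<longrightarrow> D i $$ (r, c) = 0"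
    using res unfolding is_proj_res_def by blast+
  obtain \<epsilon> where ec: "\<forall>y\<in>Q. \<epsilon> y \<in> carrier_mat (fst \<Gamma> y) (length (active leQ (E 0) y))"
        and en: "\<forall>y\<in>Q. \<forall>z\<in>Q. leQ y z \<longrightarrow> \<epsilon> z * proj_struct leQ (E 0) y z = snd \<Gamma> y z * \<epsilon> y"
        and es: "\<forall>y\<in>Q. \<forall>v\<in>carrier_vec (fst \<Gamma> y).
              \<exists>x\<in>carrier_vec (length (active leQ (E 0) y)). \<epsilon> y *\<^sub>v x = v"
        and ex0: "\<forall>y\<in>Q. exact_at (length (active leQ (E 1) y)) (length (active leQ (E 0) y)) (fst \<Gamma> y)
              (mat_morph_at leQ (E 1) (E 0) (D 0) y) (\<epsilon> y)"
        and exS: "\<forall>y\<in>Q. \<forall>i. exact_at (length (active leQ (E (Suc (Suc i))) y))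
              (length (active leQ (E (Suc i)) y)) (length (active leQ (E i) y))
              (mat_morph_at leQ (E (Suc (Suc i))) (E (Suc i)) (D (Suc i)) y)
              (mat_morph_at leQ (E (Suc i)) (E i) (D i) y)"
    using res unfolding is_proj_res_def by blast
  have am: "\<And>i y. y \<in> P \<Longrightarrow> active lep (map f (E i)) y = active leQ (E i) (g y)"
    using active_map[OF EQ _ adj] by blast
  have ps: "\<And>y z. y \<in> P \<Longrightarrow> z \<in> P \<Longrightarrow> proj_struct lep (map f (E 0)) y z = proj_struct leQ (E 0) (g y) (g z)"
    unfolding proj_struct_def using am by simp
  have mm: "\<And>i j k y. y \<in> P \<Longrightarrow> mat_morph_at lep (map f (E j)) (map f (E i)) (D k) y = mat_morph_at leQ (E j) (E i) (D k) (g y)"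
    unfolding mat_morph_at_def using am by simp
  show ?thesis unfolding is_proj_res_def
  proof (intro conjI exI[of _ "\<lambda>y. \<phi> y * \<epsilon> (g y)"])
    show "\<forall>i. set (map f (E i)) \<subseteq> P" using EQ fQ by auto
  next
    show "\<forall>i. D i \<in> carrier_mat (length (map f (E (Suc i)))) (length (map f (E i)))" using Dc by simp
  next
    show "\<forall>i. \<forall>r<length (map f (E (Suc i))). \<forall>c<length (map f (E i)).
       \<not> lep (map f (E i) ! c) (map f (E (Suc i)) ! r) \<longrightarrow> D i $$ (r, c) = 0"
    proof (intro allI impI)
      fix i r c assume r: "r < length (map f (E (Suc i)))" and c: "c < length (map f (E i))"
        and nl: "\<not> lep (map f (E i) ! c) (map f (E (Suc i)) ! r)"
      have cQ: "E i ! c \<in> Q" using EQ[of i] c by (simp add: subset_iff)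
      have rQ: "E (Suc i) ! r \<in> Q" using EQ[of "Suc i"] r by (simp add: subset_iff)
      have "\<not> leQ (E i ! c) (E (Suc i) ! r)" using nl fmono[OF cQ rQ] r c by auto
      thus "D i $$ (r, c) = 0" using Dt[of i] r c by simp
    qed
  next
    show "\<forall>y\<in>P. \<phi> y * \<epsilon> (g y) \<in> carrier_mat (fst M y) (length (active lep (map f (E 0)) y))"
      using \<phi>c ec gP am by (metis mult_carrier_mat)
  next
    show "\<forall>y\<in>P. \<forall>z\<in>P. lep y z \<longrightarrow> \<phi> z * \<epsilon> (g z) * proj_struct lep (map f (E 0)) y z = snd M y z * (\<phi> y * \<epsilon> (g y))"
    proof (intro ballI impI)
      fix y z assume y: "y \<in> P" and z: "z \<in> P" and yz: "lep y z"
      have c1: "\<phi> z \<in> carrier_mat (fst M z) (fst \<Gamma> (g z))" using \<phi>c[OF z] .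
      have c2: "\<epsilon> (g z) \<in> carrier_mat (fst \<Gamma> (g z)) (length (active leQ (E 0) (g z)))" using ec gP[OF z] by blast
      have c3: "proj_struct leQ (E 0) (g y) (g z) \<in> carrier_mat (length (active leQ (E 0) (g z))) (length (active leQ (E 0) (g y)))"
        by (simp add: proj_struct_def)
      have c4: "snd \<Gamma> (g y) (g z) \<in> carrier_mat (fst \<Gamma> (g z)) (fst \<Gamma> (g y))" using Gc gP y z gmono yz by blast
      have c5: "\<epsilon> (g y) \<in> carrier_mat (fst \<Gamma> (g y)) (length (active leQ (E 0) (g y)))" using ec gP[OF y] by blast
      have c6: "snd M y z \<in> carrier_mat (fst M z) (fst M y)"
        using pmM y z yz unfolding is_pmod_def by blast
      have "\<phi> z * \<epsilon> (g z) * proj_struct lep (map f (E 0)) y z = \<phi> z * (\<epsilon> (g z) * proj_struct leQ (E 0) (g y) (g z))"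
        unfolding ps[OF y z] using c1 c2 c3 by (rule assoc_mult_mat)
      also have "\<dots> = \<phi> z * (snd \<Gamma> (g y) (g z) * \<epsilon> (g y))" using en gP y z gmono yz by simp
      also have "\<dots> = (\<phi> z * snd \<Gamma> (g y) (g z)) * \<epsilon> (g y)" using c1 c4 c5 by (rule assoc_mult_mat[symmetric])
      also have "\<dots> = (snd M y z * \<phi> y) * \<epsilon> (g y)" using \<phi>n[OF y z yz] by simp
      also have "\<dots> = snd M y z * (\<phi> y * \<epsilon> (g y))" using c6 \<phi>c[OF y] c5 by (rule assoc_mult_mat)
      finally show "\<phi> z * \<epsilon> (g z) * proj_struct lep (map f (E 0)) y z = snd M y z * (\<phi> y * \<epsilon> (g y))" .
    qed
  next
    show "\<forall>y\<in>P. \<forall>v\<in>carrier_vec (fst M y). \<exists>x\<in>carrier_vec (length (active lep (map f (E 0)) y)). \<phi> y * \<epsilon> (g y) *\<^sub>v x = v"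
    proof (intro ballI)
      fix y and v :: "'k vec" assume y: "y \<in> P" and v: "v \<in> carrier_vec (fst M y)"
      obtain B where nn: "fst M y = fst \<Gamma> (g y)" and B: "B \<in> carrier_mat (fst \<Gamma> (g y)) (fst \<Gamma> (g y))"
        and AB: "\<phi> y * B = 1\<^sub>m (fst \<Gamma> (g y))" using inv_facts[OF \<phi>c[OF y] \<phi>i[OF y]] by blast
      have c5: "\<epsilon> (g y) \<in> carrier_mat (fst \<Gamma> (g y)) (length (active leQ (E 0) (g y)))" using ec gP[OF y] by blast
      obtain x where x: "x \<in> carrier_vec (length (active leQ (E 0) (g y)))" "\<epsilon> (g y) *\<^sub>v x = B *\<^sub>v v"
        using es gP[OF y] B v nn by (metis mult_mat_vec_carrier)
      have "\<phi> y * \<epsilon> (g y) *\<^sub>v x = \<phi> y *\<^sub>v (B *\<^sub>v v)" using \<phi>c[OF y] c5 x by (subst assoc_mult_mat_vec) auto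
      also have "\<dots> = v" using \<phi>c[OF y] B v nn AB by (metis assoc_mult_mat_vec one_mult_mat_vec)
      finally show "\<exists>x\<in>carrier_vec (length (active lep (map f (E 0)) y)). \<phi> y * \<epsilon> (g y) *\<^sub>v x = v"
        using x am[OF y] by auto
    qed
  next
    show "\<forall>y\<in>P. exact_at (length (active lep (map f (E 1)) y)) (length (active lep (map f (E 0)) y)) (fst M y)
              (mat_morph_at lep (map f (E 1)) (map f (E 0)) (D 0) y) (\<phi> y * \<epsilon> (g y))"
    proof
      fix y assume y: "y \<in> P"
      obtain B where nn: "fst M y = fst \<Gamma> (g y)" and B: "B \<in> carrier_mat (fst \<Gamma> (g y)) (fst \<Gamma> (g y))"
        and BA: "B * \<phi> y = 1\<^sub>m (fst \<Gamma> (g y))" using inv_facts[OF \<phi>c[OF y] \<phi>i[OF y]] by blast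
      have c5: "\<epsilon> (g y) \<in> carrier_mat (fst \<Gamma> (g y)) (length (active leQ (E 0) (g y)))" using ec gP[OF y] by blast
      have iff: "\<phi> y * \<epsilon> (g y) *\<^sub>v x = 0\<^sub>v (fst M y) \<longleftrightarrow> \<epsilon> (g y) *\<^sub>v x = 0\<^sub>v (fst \<Gamma> (g y))"
        if x: "x \<in> carrier_vec (length (active leQ (E 0) (g y)))" for x :: "'k vec"
      proof -
        have e: "\<phi> y * \<epsilon> (g y) *\<^sub>v x = \<phi> y *\<^sub>v (\<epsilon> (g y) *\<^sub>v x)" using \<phi>c[OF y] c5 x by (subst assoc_mult_mat_vec) auto
        have ex: "\<epsilon> (g y) *\<^sub>v x \<in> carrier_vec (fst \<Gamma> (g y))" using c5 x by simp
        show ?thesis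
        proof
          assume "\<phi> y * \<epsilon> (g y) *\<^sub>v x = 0\<^sub>v (fst M y)"
          hence "B *\<^sub>v (\<phi> y *\<^sub>v (\<epsilon> (g y) *\<^sub>v x)) = B *\<^sub>v 0\<^sub>v (fst M y)" using e by simp
          thus "\<epsilon> (g y) *\<^sub>v x = 0\<^sub>v (fst \<Gamma> (g y))"
            using B BA ex \<phi>c[OF y] nn mv_zero[OF B]
            by (metis assoc_mult_mat_vec one_mult_mat_vec)
        next
          assume "\<epsilon> (g y) *\<^sub>v x = 0\<^sub>v (fst \<Gamma> (g y))"
          thus "\<phi> y * \<epsilon> (g y) *\<^sub>v x = 0\<^sub>v (fst M y)" using e mv_zero[OF \<phi>c[OF y]] by simp
        qed
      qed
      show "exact_at (length (active lep (map f (E 1)) y)) (length (active lep (map f (E 0)) y)) (fst M y)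
              (mat_morph_at lep (map f (E 1)) (map f (E 0)) (D 0) y) (\<phi> y * \<epsilon> (g y))"
        using ex0 gP[OF y] iff unfolding exact_at_def am[OF y] mm[OF y] by simp
    qed
  next
    show "\<forall>y\<in>P. \<forall>i. exact_at (length (active lep (map f (E (Suc (Suc i)))) y))
              (length (active lep (map f (E (Suc i))) y)) (length (active lep (map f (E i)) y))
              (mat_morph_at lep (map f (E (Suc (Suc i)))) (map f (E (Suc i))) (D (Suc i)) y)
              (mat_morph_at lep (map f (E (Suc i))) (map f (E i)) (D i) y)"
    proof (intro ballI allI)
      fix y i assume y: "y \<in> P"
      show "exact_at (length (active lep (map f (E (Suc (Suc i)))) y))
              (length (active lep (map f (E (Suc i))) y)) (length (active lep (map f (E i)) y))
              (mat_morph_at lep (map f (E (Suc (Suc i)))) (map f (E (Suc i))) (D (Suc i)) y)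
              (mat_morph_at lep (map f (E (Suc i))) (map f (E i)) (D i) y)"
        unfolding am[OF y] mm[OF y] using exS gP[OF y] by blast
    qed
  qed
qed


theorem corollary5p3:
  fixes P :: "'p set" and lep :: "'p \<Rightarrow> 'p \<Rightarrow> bool"
    and M N :: "('p, 'k::field) pmod"
  assumes "finite_poset P lep"
    and "is_pmod P lep M" and "is_pmod P lep N"
    and "galois_coupling_exists P lep M N"
  shows "Res P lep M N \<noteq> {}
    \<and> (\<exists>E DE F DF. ((E, DE), (F, DF)) \<in> Res P lep M N \<and> has_matching E DE F DF)"
proof -
  obtain Q :: "nat set" and leQ f g h i and \<Gamma> :: "(nat, 'k) pmod" where
    fpQ: "finite_poset Q leQ" and gi1: "galois_insertion Q leQ P lep f g"
    and gi2: "galois_insertion Q leQ P lep h i" and pmG: "is_pmod Q leQ \<Gamma>"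
    and iso1: "pmod_iso P lep (pullback g \<Gamma>) M" and iso2: "pmod_iso P lep (pullback i \<Gamma>) N"
    using assms(4) unfolding galois_coupling_exists_def by blast
  obtain E D where res: "is_proj_res Q leQ \<Gamma> E D" using proj_res_exists[OF fpQ pmG] by blast
  have r1: "is_proj_res P lep M (\<lambda>n. map f (E n)) D" by (rule transfer[OF gi1 pmG res assms(2) iso1])
  have r2: "is_proj_res P lep N (\<lambda>n. map h (E n)) D" by (rule transfer[OF gi2 pmG res assms(3) iso2])
  have mem: "(((\<lambda>n. map f (E n)), D), ((\<lambda>n. map h (E n)), D)) \<in> Res P lep M N"
    unfolding Res_def using r1 r2 by simp
  have hm: "has_matching (\<lambda>n. map f (E n)) D (\<lambda>n. map h (E n)) D"
    unfolding has_matching_def by (rule exI[of _ "\<lambda>_ x. x"]) (simp add: bij_betw_def)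
  show ?thesis using mem hm by blast
qed

end
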